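(* Under the hypotheses of the decomposability theorem for sums (so $S_{(0)}=S_{(1)}+S_{(2)}$ is spectrally decomposable over $S_{(1)}$ with $\kappa=1$ and length $\ell$), one has $A_{0,1}(s)=0$ and $$A_{0,0}(s)=\sum_{n_1=1}^\infty\Big(-\log\Gamma(\lambda_{(1),n_1},S_{(2)})+\sum_{j=0}^{p_{(2)}}a_{(2),j,1}\lambda_{(1),n_1}^j\log\lambda_{(1),n_1}+\sum_{h=0}^\ell a_{(2),\alpha_{(2),h},0}\lambda_{(1),n_1}^{\alpha_{(2),h}}\Big)\lambda_{(1),n_1}^{-s}.$$
   Context: Gamma function of a sequence $S=\{\lambda_n\}$ of genus $\mathsf g(S)$: $\frac1{\Gamma(z,S)}=\prod_n(1+\frac z{\lambda_n})\exp(\sum_{j=1}^{\mathsf g(S)}\frac{(-1)^j}{j}\frac{z^j}{\lambda_n^j})$; $\log(-\lambda)$ is real on the negative real axis. Let $S_{(1)}$ (positive reals) and $S_{(2)}$ be totally regular sequences of spectral type with exponents $s_{(i)}$, genera $p_{(i)}$, orders $\alpha_{(i),N_{(i)}}\le0$, $\alpha_{(1),N_{(1)}}<-p_{(2)}-1$, $-\alpha_{(2),N_{(2)}}\ge s_{(1)}$, with $\log\Gamma(-\lambda,S_{(2)})=\sum_{h}a_{(2),\alpha_{(2),h},0}(-\lambda)^{\alpha_{(2),h}}+\sum_{j=0}^{p_{(2)}}a_{(2),j,1}(-\lambda)^j\log(-\lambda)+o(\cdot)$ as $\lambda\to\infty$ (totally regular: log terms only at integer $j\in[0,p_{(2)}]$).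 Let $\ell$ be the largest integer with $-\alpha_{(2),\ell}\le s_{(1)}$. For $\tilde S_{n_1}=\lambda_{(1),n_1}^{-1}\{\lambda_{(1),n_1}+\lambda_{(2),n_2}\}_{n_2}$ one has, as $n_1\to\infty$ uniformly in $\lambda$, $\log\Gamma(-\lambda,\tilde S_{n_1})=\sum_{h=0}^{\ell}\tilde\phi_{h}(\lambda)\lambda_{(1),n_1}^{\alpha_{(2),h}}+\sum_{l=0}^{p_{(2)}}\hat\phi_{l}(\lambda)\lambda_{(1),n_1}^{l}+\sum_{l=0}^{p_{(2)}}P_l(\lambda)\lambda_{(1),n_1}^l\log\lambda_{(1),n_1}+o(\lambda_{(1),n_1}^{-s_{(1)}})$ with $\tilde\phi_h(\lambda)=a_{(2),\alpha_{(2),h},0}((1-\lambda)^{\alpha_{(2),h}}-1)-\sum_{k=1}^{p_{(0)}}K_{k,h,0}(-\lambda)^k$, $\hat\phi_l(\lambda)=a_{(2),l,1}(1-\lambda)^l\log(1-\lambda)-\sum_{k=1}^{p_{(0)}}K_{k,l,2}(-\lambda)^k$, $P_l$ polynomials vanishing at $0$, $K$'s constants, $p_{(0)}=[s_{(1)}+s_{(2)}]$; these $\tilde\phi_h,\hat\phi_l$ are the functions $\phi_\sigma$ of the decomposition (with $\sigma=-\alpha_{(2),h}$, resp. $\sigma=-l$). Writing $a_{0,k,n_1}$ for the coefficient of $(-\lambda)^0\log^k(-\lambda)$ in the large-$\lambda$ expansion of $\log\Gamma(-\lambda,\tilde S_{n_1})$ and $b_{\sigma,0,k}$ for that of $(-\lambda)^0\log^k(-\lambda)$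 in the large-$\lambda$ expansion of $\phi_\sigma$, define $A_{0,k}(s)=\sum_{n_1\ge1}\big(a_{0,k,n_1}-\sum_\sigma b_{\sigma,0,k}\lambda_{(1),n_1}^{-\sigma}\big)\lambda_{(1),n_1}^{-s}$, $k=0,1$, the sum over $\sigma$ running over all the functions $\phi_\sigma$ above. *)

theory Defs
  imports "HOL-Analysis.Analysis" "HOL-Library.Landau_Symbols"
begin

definition sector :: "real \<Rightarrow> real \<Rightarrow> complex set" where
  "sector c \<theta> = {z. z = complex_of_real c \<or> \<bar>Arg (z - complex_of_real c)\<bar> \<le> \<theta> / 2}"

definition outside_sector :: "real \<Rightarrow> real \<Rightarrow> complex filter" where
  "outside_sector c \<theta> = inf at_infinity (principal (- sector c \<theta>))"

definition exponent_conv :: "(nat \<Rightarrow> complex) \<Rightarrow> real" where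
  "exponent_conv S = Inf {s. summable (\<lambda>n. norm (S n) powr (- s))}"

definition genus :: "(nat \<Rightarrow> complex) \<Rightarrow> nat" where
  "genus S = (LEAST p. summable (\<lambda>n. 1 / norm (S n) ^ (p + 1)))"

definition logGamma_seq :: "(nat \<Rightarrow> complex) \<Rightarrow> complex \<Rightarrow> complex" where
  "logGamma_seq S z =
     - (\<Sum>n. ln (1 + z / S n)
            + (\<Sum>j=1..genus S. (-1) ^ j / of_nat j * (z / S n) ^ j))"

definition totally_regular_spectral ::
  "(nat \<Rightarrow> complex) \<Rightarrow> real \<Rightarrow> nat \<Rightarrow> (nat \<Rightarrow> real) \<Rightarrow> nat \<Rightarrow> (real \<Rightarrow> nat \<Rightarrow> complex) \<Rightarrow> bool"
where
  "totally_regular_spectral S s p \<alpha> N a \<longleftrightarrow>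
     (\<forall>n. S n \<noteq> 0) \<and>
     (\<exists>s'. summable (\<lambda>n. norm (S n) powr (- s'))) \<and>
     s = exponent_conv S \<and> p = genus S \<and>
     (\<forall>h<N. \<alpha> (Suc h) < \<alpha> h) \<and>
     (\<exists>c \<theta>. 0 < c \<and> 0 < \<theta> \<and> \<theta> < pi \<and> range S \<subseteq> sector c \<theta> \<and>
        (\<lambda>x. logGamma_seq S (- x)
              - (\<Sum>h\<le>N. a (\<alpha> h) 0 * (- x) powr complex_of_real (\<alpha> h))
              - (\<Sum>j\<le>p. a (real j) 1 * (- x) ^ j * ln (- x)))
        \<in> o[outside_sector c \<theta>](\<lambda>x. (- x) powr complex_of_real (\<alpha> N)))"

text \<open>Coefficient of (-lambda)^0 log^k(-lambda) in the large-lambda expansion of f,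
  the expansion being taken along lambda \<rightarrow> -\<infinity> (i.e. -lambda \<rightarrow> +\<infinity>) up to o(1).
  The terms with nonnegative exponent are uniquely determined there.\<close>
definition const_coeff :: "(complex \<Rightarrow> complex) \<Rightarrow> nat \<Rightarrow> complex" where
  "const_coeff f k = (THE v. \<exists>c :: real \<Rightarrow> nat \<Rightarrow> complex.
      finite {(\<beta>, j). c \<beta> j \<noteq> 0} \<and> v = c 0 k \<and>
      ((\<lambda>x. f x - (\<Sum>(\<beta>, j)\<in>{(\<beta>, j). c \<beta> j \<noteq> 0}.
                       c \<beta> j * (- x) powr complex_of_real \<beta> * ln (- x) ^ j))
        \<longlongrightarrow> 0) (filtermap (\<lambda>t. - complex_of_real t) at_top))"

end

theory Submission
  imports Defs "HOL-Real_Asymp.Real_Asymp"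
begin


definition supp2 :: "(real \<Rightarrow> nat \<Rightarrow> complex) \<Rightarrow> (real \<times> nat) set" where
  "supp2 c = {(b, j). c b j \<noteq> 0}"

definition mon :: "real \<Rightarrow> nat \<Rightarrow> real \<Rightarrow> complex" where
  "mon b j t = complex_of_real (t powr b * ln t ^ j)"

definition hasE :: "(real \<Rightarrow> complex) \<Rightarrow> (real \<Rightarrow> nat \<Rightarrow> complex) \<Rightarrow> bool" where
  "hasE g c \<longleftrightarrow> finite (supp2 c) \<and>
     ((\<lambda>t. g t - (\<Sum>(b, j)\<in>supp2 c. c b j * mon b j t)) \<longlongrightarrow> 0) at_top"

lemma sum_supp2_superset:
  assumes "finite U" "supp2 c \<subseteq> U"
  shows "(\<Sum>(b, j)\<in>supp2 c. c b j * m b j) = (\<Sum>(b, j)\<in>U. c b j * m b j)"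
  by (rule sum.mono_neutral_left) (use assms in \<open>auto simp: supp2_def\<close>)

lemma hasE_iff_superset:
  assumes "finite U" "supp2 c \<subseteq> U"
  shows "hasE g c \<longleftrightarrow> ((\<lambda>t. g t - (\<Sum>(b, j)\<in>U. c b j * mon b j t)) \<longlongrightarrow> 0) at_top"
proof -
  have "finite (supp2 c)" using assms finite_subset by blast
  moreover have "\<And>t. (\<Sum>(b, j)\<in>supp2 c. c b j * mon b j t) = (\<Sum>(b, j)\<in>U. c b j * mon b j t)"
    using sum_supp2_superset[OF assms, of "\<lambda>b j. mon b j _"] by simp
  ultimately show ?thesis unfolding hasE_def by simp
qed

lemma hasE_supersetI:
  assumes "finite U" "supp2 c \<subseteq> U"
    "((\<lambda>t. g t - (\<Sum>(b, j)\<in>U. c b j * mon b j t)) \<longlongrightarrow> 0) at_top"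
  shows "hasE g c"
  using hasE_iff_superset[OF assms(1,2)] assms(3) by simp

lemma hasE_add:
  assumes "hasE f c" "hasE g d"
  shows "hasE (\<lambda>t. f t + g t) (\<lambda>b j. c b j + d b j)"
proof -
  let ?U = "supp2 c \<union> supp2 d"
  have fin: "finite ?U" using assms unfolding hasE_def by auto
  have s1: "supp2 c \<subseteq> ?U" "supp2 d \<subseteq> ?U" "supp2 (\<lambda>b j. c b j + d b j) \<subseteq> ?U"
    by (auto simp: supp2_def)
  have "((\<lambda>t. (f t - (\<Sum>(b, j)\<in>?U. c b j * mon b j t)) + (g t - (\<Sum>(b, j)\<in>?U. d b j * mon b j t))) \<longlongrightarrow> 0 + 0) at_top"
    using assms hasE_iff_superset[OF fin s1(1)] hasE_iff_superset[OF fin s1(2)]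
    by (intro tendsto_add) auto
  moreover have "\<And>t. (f t - (\<Sum>(b, j)\<in>?U. c b j * mon b j t)) + (g t - (\<Sum>(b, j)\<in>?U. d b j * mon b j t))
     = (f t + g t) - (\<Sum>(b, j)\<in>?U. (c b j + d b j) * mon b j t)"
    by (simp add: sum.distrib distrib_right case_prod_unfold)
  ultimately show ?thesis using hasE_iff_superset[OF fin s1(3)] by simp
qed

lemma hasE_scale:
  assumes "hasE f c"
  shows "hasE (\<lambda>t. a * f t) (\<lambda>b j. a * c b j)"
proof -
  let ?U = "supp2 c"
  have fin: "finite ?U" using assms unfolding hasE_def by auto
  have s1: "supp2 (\<lambda>b j. a * c b j) \<subseteq> ?U" by (auto simp: supp2_def)
  have "((\<lambda>t. a * (f t - (\<Sum>(b, j)\<in>?U. c b j * mon b j t))) \<longlongrightarrow> a * 0) at_top"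
    using assms unfolding hasE_def by (intro tendsto_mult) auto
  moreover have "\<And>t. a * (f t - (\<Sum>(b, j)\<in>?U. c b j * mon b j t))
     = a * f t - (\<Sum>(b, j)\<in>?U. (a * c b j) * mon b j t)"
    by (simp add: sum_distrib_left right_diff_distrib case_prod_unfold mult.assoc)
  ultimately show ?thesis using hasE_iff_superset[OF fin s1] by simp
qed

lemma hasE_lim0:
  assumes "(f \<longlongrightarrow> 0) at_top"
  shows "hasE f (\<lambda>b j. 0)"
  using assms unfolding hasE_def supp2_def by simp

lemma hasE_zero: "hasE (\<lambda>t. 0) (\<lambda>b j. 0)"
  by (rule hasE_lim0) simp

lemma hasE_sum:
  assumes "finite I" "\<And>i. i \<in> I \<Longrightarrow> hasE (f i) (c i)"
  shows "hasE (\<lambda>t. \<Sum>i\<in>I. f i t) (\<lambda>b j. \<Sum>i\<in>I. c i b j)"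
  using assms
proof (induction I rule: finite_induct)
  case empty
  then show ?case using hasE_zero by simp
next
  case (insert x F)
  then show ?case using hasE_add[of "f x" "c x" "\<lambda>t. \<Sum>i\<in>F. f i t" "\<lambda>b j. \<Sum>i\<in>F. c i b j"]
    by simp
qed

lemma hasE_mon: "hasE (mon b0 j0) (\<lambda>b j. if b = b0 \<and> j = j0 then 1 else 0)"
proof -
  have "supp2 (\<lambda>b j. if b = b0 \<and> j = j0 then 1 else 0 :: complex) = {(b0, j0)}"
    by (auto simp: supp2_def)
  then show ?thesis unfolding hasE_def by simp
qed

lemma hasE_ev:
  assumes "hasE f c" "eventually (\<lambda>t. f t = g t) at_top"
  shows "hasE g c"
proof -
  have "eventually (\<lambda>t. f t - (\<Sum>(b, j)\<in>supp2 c. c b j * mon b j t) = g t - (\<Sum>(b, j)\<in>supp2 c. c b j * mon b j t)) at_top"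
    using assms(2) by eventually_elim simp
  from tendsto_cong[OF this] show ?thesis using assms(1) unfolding hasE_def by simp
qed



lemma tendsto_ev:
  assumes "(f \<longlongrightarrow> l) F" "eventually (\<lambda>x. f x = g x) F"
  shows "(g \<longlongrightarrow> l) F"
  by (rule iffD1[OF tendsto_cong[OF assms(2)] assms(1)])

lemma lim_powr_ln_ratio1:
  assumes "d > 0"
  shows "((\<lambda>t::real. t powr (-d) * ln t ^ j / ln t ^ m) \<longlongrightarrow> 0) at_top"
  using assms by real_asymp

lemma lim_ln_ratio2:
  assumes "j < m"
  shows "((\<lambda>t::real. ln t ^ j / ln t ^ m) \<longlongrightarrow> 0) at_top"
proof -
  have "((\<lambda>t::real. 1 / ln t ^ (m - j)) \<longlongrightarrow> 0) at_top"
    using assms by real_asymp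
  moreover have "eventually (\<lambda>t::real. 1 / ln t ^ (m - j) = ln t ^ j / ln t ^ m) at_top"
    using eventually_gt_at_top[of 1]
  proof eventually_elim
    case (elim t)
    then have "ln t > 0" by simp
    have "ln t ^ m = ln t ^ j * ln t ^ (m - j)" using assms
      by (metis less_imp_le_nat power_add le_add_diff_inverse)
    then show ?case using \<open>ln t > 0\<close> by simp
  qed
  ultimately show ?thesis by (rule tendsto_ev)
qed

lemma exp_indep:
  assumes finU: "finite U" and lim: "((\<lambda>t. \<Sum>(b, j)\<in>U. e b j * mon b j t) \<longlongrightarrow> 0) at_top"
    and mem: "(b0, j0) \<in> U" and b0: "0 \<le> b0"
  shows "e b0 j0 = 0"
proof (rule ccontr)
  assume ne: "e b0 j0 \<noteq> 0"
  define V where "V = {p \<in> U. e (fst p) (snd p) \<noteq> 0 \<and> 0 \<le> fst p}"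
  have finV: "finite V" using finU unfolding V_def by simp
  have b0V: "(b0, j0) \<in> V" using ne mem b0 unfolding V_def by simp
  define bm where "bm = Max (fst ` V)"
  have bmV: "bm \<in> fst ` V" unfolding bm_def using finV b0V by (intro Max_in) auto
  define W where "W = {p \<in> V. fst p = bm}"
  have finW: "finite W" using finV unfolding W_def by simp
  have Wne: "W \<noteq> {}" using bmV unfolding W_def by auto
  define jm where "jm = Max (snd ` W)"
  have jmW: "jm \<in> snd ` W" unfolding jm_def using finW Wne by (intro Max_in) auto
  have mV: "(bm, jm) \<in> V" using jmW unfolding W_def by auto
  have bm_nonneg: "0 \<le> bm" using mV unfolding V_def by auto
  have em: "e bm jm \<noteq> 0" using mV unfolding V_def by auto
  have mU: "(bm, jm) \<in> U" using mV unfolding V_def by auto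
  have order: "b < bm \<or> (b = bm \<and> j < jm)"
    if "(b, j) \<in> U" "e b j \<noteq> 0" "(b, j) \<noteq> (bm, jm)" for b j
  proof (cases "0 \<le> b")
    case True
    then have bV: "(b, j) \<in> V" using that unfolding V_def by auto
    have "b \<in> fst ` V" using bV by (force intro: image_eqI[where x="(b, j)"])
    then have "b \<le> bm" unfolding bm_def using finV by (intro Max_ge) auto
    moreover have "b = bm \<Longrightarrow> j \<le> jm"
    proof -
      assume "b = bm"
      then have "(b, j) \<in> W" using bV unfolding W_def by auto
      then have "j \<in> snd ` W" by (force intro: image_eqI[where x="(b, j)"])
      then show "j \<le> jm" unfolding jm_def using finW by (intro Max_ge) auto
    qed
    ultimately show ?thesis using that(3) by (cases "b = bm") auto
  next
    case False
    then show ?thesis using bm_nonneg by auto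
  qed
  define r where "r b j t = t powr (b - bm) * ln t ^ j / ln t ^ jm" for b j t
  define L where "L b j = (if (b, j) = (bm, jm) then e bm jm else 0)" for b j
  define H where "H t = (\<Sum>(b, j)\<in>U. e b j * mon b j t) * complex_of_real (1 / (t powr bm * ln t ^ jm))" for t
  have termlim: "((\<lambda>t. e b j * complex_of_real (r b j t)) \<longlongrightarrow> L b j) at_top"
    if "(b, j) \<in> U" for b j
  proof (cases "e b j = 0")
    case True
    then show ?thesis unfolding L_def using em by auto
  next
    case False
    show ?thesis
    proof (cases "(b, j) = (bm, jm)")
      case True
      have "eventually (\<lambda>t. e bm jm = e b j * complex_of_real (r b j t)) at_top"
        using eventually_gt_at_top[of "1"]
      proof eventually_elim
        case (elim t)
        then have "ln t > 0" by simp
        then show ?case using True \<open>t > 1\<close> unfolding r_def by simp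
      qed
      then have "((\<lambda>t. e b j * complex_of_real (r b j t)) \<longlongrightarrow> e bm jm) at_top"
        by (rule tendsto_ev[OF tendsto_const])
      then show ?thesis unfolding L_def using True by simp
    next
      case ne2: False
      have "(r b j \<longlongrightarrow> 0) at_top"
      proof (cases "b < bm")
        case True
        have "((\<lambda>t::real. t powr (-(bm - b)) * ln t ^ j / ln t ^ jm) \<longlongrightarrow> 0) at_top"
          using True by (intro lim_powr_ln_ratio1) simp
        then show ?thesis unfolding r_def by simp
      next
        case False
        then have "b = bm \<and> j < jm" using order[OF that \<open>e b j \<noteq> 0\<close> ne2] by auto
        then have "((\<lambda>t::real. ln t ^ j / ln t ^ jm) \<longlongrightarrow> 0) at_top"
          by (intro lim_ln_ratio2) simp
        moreover have "eventually (\<lambda>t. ln t ^ j / ln t ^ jm = r b j t) at_top"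
          using eventually_gt_at_top[of 0]
        proof eventually_elim
          case (elim t)
          then show ?case using \<open>b = bm \<and> j < jm\<close> unfolding r_def by simp
        qed
        ultimately show ?thesis by (rule tendsto_ev)
      qed
      then have "((\<lambda>t. e b j * complex_of_real (r b j t)) \<longlongrightarrow> e b j * complex_of_real 0) at_top"
        by (intro tendsto_mult tendsto_of_real) auto
      moreover have "L b j = 0" using ne2 unfolding L_def by auto
      ultimately show ?thesis by simp
    qed
  qed
  have A: "((\<lambda>t. \<Sum>(b, j)\<in>U. e b j * complex_of_real (r b j t)) \<longlongrightarrow> (\<Sum>(b, j)\<in>U. L b j)) at_top"
    using termlim by (intro tendsto_sum) (auto simp: case_prod_unfold)
  have B: "(\<Sum>(b, j)\<in>U. L b j) = e bm jm"
  proof -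
    have "(\<Sum>(b, j)\<in>U. L b j) = (\<Sum>p\<in>U. if p = (bm, jm) then e bm jm else 0)"
      unfolding L_def by (intro sum.cong refl) (auto simp: case_prod_unfold prod_eq_iff)
    also have "\<dots> = e bm jm" using finU mU by simp
    finally show ?thesis .
  qed
  have C: "eventually (\<lambda>t. (\<Sum>(b, j)\<in>U. e b j * complex_of_real (r b j t)) = H t) at_top"
    using eventually_gt_at_top[of 1]
  proof eventually_elim
    case (elim t)
    then have lt: "ln t > 0" by simp
    have "H t = (\<Sum>(b, j)\<in>U. e b j * mon b j t * complex_of_real (1 / (t powr bm * ln t ^ jm)))"
      unfolding H_def by (simp only: sum_distrib_right case_prod_unfold)
    also have "\<dots> = (\<Sum>(b, j)\<in>U. e b j * complex_of_real (r b j t))"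
    proof (intro sum.cong refl, clarify)
      fix b j
      have "t powr b * ln t ^ j * (1 / (t powr bm * ln t ^ jm)) = r b j t"
        unfolding r_def using elim lt by (simp add: powr_diff field_simps)
      then show "e b j * mon b j t * complex_of_real (1 / (t powr bm * ln t ^ jm)) = e b j * complex_of_real (r b j t)"
        unfolding mon_def mult.assoc of_real_mult[symmetric] by simp
    qed
    finally show ?case by simp
  qed
  have H1: "(H \<longlongrightarrow> e bm jm) at_top" using tendsto_ev[OF A C] B by simp
  have H0: "(H \<longlongrightarrow> 0) at_top"
  proof (rule Lim_null_comparison)
    show "eventually (\<lambda>t. norm (H t) \<le> norm (\<Sum>(b, j)\<in>U. e b j * mon b j t)) at_top"
      using eventually_ge_at_top[of "exp 1"]
    proof eventually_elim
      case (elim t)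
      have tpos: "t > 0" using elim exp_gt_zero[of 1] by linarith
      have l1: "ln t \<ge> 1" using ln_ge_iff[OF tpos] elim by simp
      then have t1: "t > 1" using tpos ln_gt_zero_imp_gt_one[of t] by linarith
      have p1: "ln t ^ jm \<ge> 1" using l1 by simp
      have p2: "t powr bm \<ge> 1" using t1 bm_nonneg by (intro ge_one_powr_ge_zero) auto
      have "t powr bm * ln t ^ jm \<ge> 1 * 1"
        using p1 p2 by (intro mult_mono) auto
      then have "\<bar>1 / (t powr bm * ln t ^ jm)\<bar> \<le> 1" by simp
      then show ?case unfolding H_def norm_mult norm_of_real
        by (intro mult_left_le) auto
    qed
    show "((\<lambda>t. norm (\<Sum>(b, j)\<in>U. e b j * mon b j t)) \<longlongrightarrow> 0) at_top"
      using lim by (rule tendsto_norm_zero)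
  qed
  have "e bm jm = 0" using tendsto_unique[OF _ H1 H0] by simp
  then show False using em by simp
qed

lemma hasE_unique:
  assumes "hasE g c" "hasE g d"
  shows "c 0 k = d 0 k"
proof -
  let ?U = "supp2 c \<union> supp2 d"
  have fin: "finite ?U" using assms unfolding hasE_def by auto
  have s1: "supp2 c \<subseteq> ?U" "supp2 d \<subseteq> ?U" by auto
  have "((\<lambda>t. (g t - (\<Sum>(b, j)\<in>?U. c b j * mon b j t)) - (g t - (\<Sum>(b, j)\<in>?U. d b j * mon b j t))) \<longlongrightarrow> 0 - 0) at_top"
    using assms hasE_iff_superset[OF fin s1(1)] hasE_iff_superset[OF fin s1(2)]
    by (intro tendsto_diff) auto
  moreover have "\<And>t. (g t - (\<Sum>(b, j)\<in>?U. c b j * mon b j t)) - (g t - (\<Sum>(b, j)\<in>?U. d b j * mon b j t))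
     = (\<Sum>(b, j)\<in>?U. (d b j - c b j) * mon b j t)"
    by (simp add: sum_subtractf left_diff_distrib case_prod_unfold)
  ultimately have lim: "((\<lambda>t. \<Sum>(b, j)\<in>?U. (d b j - c b j) * mon b j t) \<longlongrightarrow> 0) at_top" by simp
  show ?thesis
  proof (cases "(0, k) \<in> ?U")
    case True
    from exp_indep[OF fin lim True] show ?thesis by simp
  next
    case False
    then show ?thesis by (auto simp: supp2_def)
  qed
qed

lemma const_coeff_hasE:
  assumes "hasE (\<lambda>t. f (- complex_of_real t)) c"
  shows "const_coeff f k = c 0 k"
proof -
  have conv: "((\<lambda>x. f x - (\<Sum>(\<beta>, j)\<in>{(\<beta>, j). d \<beta> j \<noteq> 0}.
                       d \<beta> j * (- x) powr complex_of_real \<beta> * ln (- x) ^ j))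
        \<longlongrightarrow> 0) (filtermap (\<lambda>t. - complex_of_real t) at_top) \<longleftrightarrow>
        ((\<lambda>t. f (- complex_of_real t) - (\<Sum>(b, j)\<in>supp2 d. d b j * mon b j t)) \<longlongrightarrow> 0) at_top"
    for d :: "real \<Rightarrow> nat \<Rightarrow> complex"
  proof -
    have "eventually (\<lambda>t. ((\<lambda>x. f x - (\<Sum>(\<beta>, j)\<in>{(\<beta>, j). d \<beta> j \<noteq> 0}.
                       d \<beta> j * (- x) powr complex_of_real \<beta> * ln (- x) ^ j)) \<circ> (\<lambda>t. - complex_of_real t)) t
       = f (- complex_of_real t) - (\<Sum>(b, j)\<in>supp2 d. d b j * mon b j t)) at_top"
      using eventually_gt_at_top[of 0]
    proof eventually_elim
      case (elim t)
      have "\<And>b j. complex_of_real t powr complex_of_real b * ln (complex_of_real t) ^ j = mon b j t"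
        using elim by (simp add: mon_def powr_of_real Ln_of_real)
      then have "\<And>b j. d b j * complex_of_real t powr complex_of_real b * ln (complex_of_real t) ^ j = d b j * mon b j t"
        by (metis mult.assoc)
      then show ?case unfolding comp_def supp2_def
        by (intro arg_cong2[where f="(-)"] refl sum.cong) (simp only: case_prod_unfold minus_minus)
    qed
    then show ?thesis unfolding tendsto_compose_filtermap[symmetric] by (rule tendsto_cong)
  qed
  show ?thesis unfolding const_coeff_def
  proof (rule the_equality)
    show "\<exists>ca. finite {(\<beta>, j). ca \<beta> j \<noteq> 0} \<and> c 0 k = ca 0 k \<and>
      ((\<lambda>x. f x - (\<Sum>(\<beta>, j)\<in>{(\<beta>, j). ca \<beta> j \<noteq> 0}. ca \<beta> j * (- x) powr complex_of_real \<beta> * ln (- x) ^ j)) \<longlongrightarrow> 0)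
       (filtermap (\<lambda>t. - complex_of_real t) at_top)"
      using assms conv[of c] unfolding hasE_def supp2_def by auto
  next
    fix v assume "\<exists>ca. finite {(\<beta>, j). ca \<beta> j \<noteq> 0} \<and> v = ca 0 k \<and>
      ((\<lambda>x. f x - (\<Sum>(\<beta>, j)\<in>{(\<beta>, j). ca \<beta> j \<noteq> 0}. ca \<beta> j * (- x) powr complex_of_real \<beta> * ln (- x) ^ j)) \<longlongrightarrow> 0)
       (filtermap (\<lambda>t. - complex_of_real t) at_top)"
    then obtain d where d: "finite (supp2 d)" "v = d 0 k"
      "((\<lambda>t. f (- complex_of_real t) - (\<Sum>(b, j)\<in>supp2 d. d b j * mon b j t)) \<longlongrightarrow> 0) at_top"
      using conv unfolding supp2_def by blast
    then have "hasE (\<lambda>t. f (- complex_of_real t)) d" unfolding hasE_def by simp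
    then show "v = c 0 k" using hasE_unique[OF _ assms] d(2) by metis
  qed
qed



lemma ps_tail_bound:
  fixes a :: "nat \<Rightarrow> complex" and u :: complex and r B :: real
  assumes S: "(\<lambda>n. a n * u ^ n) sums f" and Bd: "\<And>n. norm (a n) * r ^ n \<le> B"
    and r: "r > 0" and u: "norm u \<le> r / 2"
  shows "norm (f - (\<Sum>n\<le>M. a n * u ^ n)) \<le> 2 * B * (norm u / r) ^ Suc M"
proof -
  define q where "q = norm u / r"
  have q0: "0 \<le> q" unfolding q_def using r by simp
  have q1: "q \<le> 1 / 2" unfolding q_def using r u by (simp add: field_simps)
  have B0: "0 \<le> B" using Bd[of 0] by (metis norm_ge_zero order_trans power_0 mult_1_right)
  have split: "(\<lambda>i. a (i + Suc M) * u ^ (i + Suc M)) sums (f - (\<Sum>n\<le>M. a n * u ^ n))"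
    using sums_split_initial_segment[OF S, of "Suc M"] by (simp add: lessThan_Suc_atMost)
  have bnd: "norm (a (i + Suc M) * u ^ (i + Suc M)) \<le> B * q ^ Suc M * q ^ i" for i
  proof -
    have "norm (a (i + Suc M)) \<le> B / r ^ (i + Suc M)"
      using Bd[of "i + Suc M"] r by (simp add: field_simps)
    then have "norm (a (i + Suc M) * u ^ (i + Suc M)) \<le> B / r ^ (i + Suc M) * norm u ^ (i + Suc M)"
      unfolding norm_mult norm_power by (intro mult_right_mono) auto
    also have "\<dots> = B * q ^ (i + Suc M)" unfolding q_def by (simp add: power_divide)
    also have "\<dots> = B * q ^ Suc M * q ^ i" by (simp add: power_add mult_ac)
    finally show ?thesis .
  qed
  have geo: "(\<lambda>i. B * q ^ Suc M * q ^ i) sums (B * q ^ Suc M * (1 / (1 - q)))"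
    using q0 q1 by (intro sums_mult geometric_sums) auto
  have "norm (f - (\<Sum>n\<le>M. a n * u ^ n)) \<le> B * q ^ Suc M * (1 / (1 - q))"
    using norm_suminf_le[OF bnd sums_summable[OF geo]] sums_unique[OF split] sums_unique[OF geo]
    by simp
  also have "\<dots> \<le> B * q ^ Suc M * 2"
    using q0 q1 B0 by (intro mult_left_mono) (auto simp: field_simps)
  also have "\<dots> = 2 * B * q ^ Suc M" by (simp add: mult_ac)
  finally have "norm (f - (\<Sum>n\<le>M. a n * u ^ n)) \<le> 2 * B * q ^ Suc M" .
  then show ?thesis by (simp only: q_def)
qed

lemma mon_eq: "t > 0 \<Longrightarrow> mon b 0 t = complex_of_real (t powr b)"
  by (simp add: mon_def)

lemma hasE_series:
  fixes a :: "nat \<Rightarrow> complex" and \<gamma> r B :: real and f :: "real \<Rightarrow> complex"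
  assumes Bd: "\<And>n. norm (a n) * r ^ n \<le> B" and r: "r > 0"
    and S: "\<And>u. 0 < u \<Longrightarrow> u \<le> r / 2 \<Longrightarrow> (\<lambda>n. a n * complex_of_real u ^ n) sums f u"
    and M: "\<gamma> < real (Suc M)"
  shows "\<exists>c. hasE (\<lambda>t. complex_of_real (t powr \<gamma>) * f (1 / t)) c"
proof -
  define R where "R t = complex_of_real (t powr \<gamma>) * (f (1 / t) - (\<Sum>n\<le>M. a n * complex_of_real (1 / t) ^ n))" for t
  have B0: "0 \<le> B" using Bd[of 0] by (metis norm_ge_zero order_trans power_0 mult_1_right)
  have R0: "(R \<longlongrightarrow> 0) at_top"
  proof (rule Lim_null_comparison)
    show "eventually (\<lambda>t. norm (R t) \<le> 2 * B / r ^ Suc M * t powr (\<gamma> - real (Suc M))) at_top"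
      using eventually_ge_at_top[of "2 / r"]
    proof eventually_elim
      case (elim t)
      have tpos: "t > 0" using elim r by (smt (verit) divide_pos_pos)
      have n1: "norm (complex_of_real (1 / t)) = 1 / t"
        using tpos by (simp only: norm_of_real) simp
      have "1 / t \<le> r / 2" using elim tpos r by (simp add: field_simps)
      then have u: "norm (complex_of_real (1 / t)) \<le> r / 2" using n1 by simp
      have Su: "(\<lambda>n. a n * complex_of_real (1 / t) ^ n) sums f (1 / t)"
        using S[of "1 / t"] tpos \<open>1 / t \<le> r / 2\<close> by simp
      have "norm (f (1 / t) - (\<Sum>n\<le>M. a n * complex_of_real (1 / t) ^ n)) \<le> 2 * B * (norm (complex_of_real (1 / t)) / r) ^ Suc M"
        using ps_tail_bound[OF Su Bd r u] by simp
      also have "\<dots> = 2 * B / r ^ Suc M * (1 / t) ^ Suc M"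
        unfolding n1 by (simp add: power_divide power_mult_distrib mult_ac)
      finally have b1: "norm (f (1 / t) - (\<Sum>n\<le>M. a n * complex_of_real (1 / t) ^ n)) \<le> 2 * B / r ^ Suc M * (1 / t) ^ Suc M" .
      have "norm (R t) \<le> t powr \<gamma> * (2 * B / r ^ Suc M * (1 / t) ^ Suc M)"
        unfolding R_def norm_mult norm_of_real abs_of_nonneg[OF powr_ge_zero] using b1 by (rule mult_left_mono) simp
      also have "\<dots> = 2 * B / r ^ Suc M * (t powr \<gamma> / t ^ Suc M)"
        by (simp add: power_divide)
      also have "t powr \<gamma> / t ^ Suc M = t powr (\<gamma> - real (Suc M))"
        using tpos by (simp only: powr_diff powr_realpow[symmetric])
      finally show ?case .
    qed
    have "((\<lambda>t::real. t powr (\<gamma> - real (Suc M))) \<longlongrightarrow> 0) at_top"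
    proof -
      have "((\<lambda>t::real. t powr (-(real (Suc M) - \<gamma>))) \<longlongrightarrow> 0) at_top"
        using M by (intro tendsto_neg_powr filterlim_ident) auto
      then show ?thesis by simp
    qed
    then show "((\<lambda>t. 2 * B / r ^ Suc M * t powr (\<gamma> - real (Suc M))) \<longlongrightarrow> 0) at_top"
      using tendsto_mult_left[of _ 0 at_top "2 * B / r ^ Suc M"] by simp
  qed
  have h1: "hasE (\<lambda>t. \<Sum>n\<le>M. a n * mon (\<gamma> - real n) 0 t) (\<lambda>b j. \<Sum>n\<le>M. a n * (if b = \<gamma> - real n \<and> j = 0 then 1 else 0))"
    by (intro hasE_sum hasE_scale hasE_mon) auto
  note h2 = hasE_add[OF h1 hasE_lim0[OF R0]]
  have ev: "eventually (\<lambda>t. (\<Sum>n\<le>M. a n * mon (\<gamma> - real n) 0 t) + R t = complex_of_real (t powr \<gamma>) * f (1 / t)) at_top"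
    using eventually_gt_at_top[of 0]
  proof eventually_elim
    case (elim t)
    have "\<And>n. complex_of_real (t powr \<gamma>) * (a n * complex_of_real (1 / t) ^ n) = a n * mon (\<gamma> - real n) 0 t"
    proof -
      fix n
      have "t powr \<gamma> * (1 / t) ^ n = t powr (\<gamma> - real n)"
        using elim by (simp add: powr_diff powr_realpow power_divide)
      then have "complex_of_real (t powr \<gamma>) * complex_of_real (1 / t) ^ n = mon (\<gamma> - real n) 0 t"
        unfolding mon_eq[OF elim] of_real_power[symmetric] of_real_mult[symmetric] by (simp only:)
      then show "complex_of_real (t powr \<gamma>) * (a n * complex_of_real (1 / t) ^ n) = a n * mon (\<gamma> - real n) 0 t"
        by (metis mult.left_commute)
    qed
    then have "complex_of_real (t powr \<gamma>) * (\<Sum>n\<le>M. a n * complex_of_real (1 / t) ^ n) = (\<Sum>n\<le>M. a n * mon (\<gamma> - real n) 0 t)"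
      unfolding sum_distrib_left by (rule sum.cong[OF refl])
    then show ?case unfolding R_def by (simp add: right_diff_distrib)
  qed
  show ?thesis using hasE_ev[OF h2 ev] by blast
qed

lemma hasE_onepow: "\<exists>c. hasE (\<lambda>t. complex_of_real ((1 + t) powr \<alpha>)) c"
proof -
  define r :: real where "r = 1 / 2"
  have "summable (\<lambda>n. (\<alpha> gchoose n) * r ^ n)"
    using gen_binomial_real[of r \<alpha>] unfolding r_def by (simp add: sums_iff)
  then have "(\<lambda>n. (\<alpha> gchoose n) * r ^ n) \<longlonglongrightarrow> 0" by (rule summable_LIMSEQ_zero)
  then have "Bseq (\<lambda>n. (\<alpha> gchoose n) * r ^ n)" by (rule convergent_imp_Bseq[OF convergentI])
  then obtain B where B: "\<And>n. norm ((\<alpha> gchoose n) * r ^ n) \<le> B" by (meson BseqE less_imp_le)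
  have Bd: "norm (complex_of_real (\<alpha> gchoose n)) * r ^ n \<le> B" for n
    using B[of n] unfolding r_def by (simp add: abs_mult)
  have S: "(\<lambda>n. complex_of_real (\<alpha> gchoose n) * complex_of_real u ^ n) sums complex_of_real ((1 + u) powr \<alpha>)"
    if "0 < u" "u \<le> r / 2" for u
  proof -
    have "(\<lambda>n. (\<alpha> gchoose n) * u ^ n) sums (1 + u) powr \<alpha>"
      using that unfolding r_def by (intro gen_binomial_real) auto
    then have "(\<lambda>n. complex_of_real ((\<alpha> gchoose n) * u ^ n)) sums complex_of_real ((1 + u) powr \<alpha>)"
      by (simp only: sums_of_real_iff)
    then show ?thesis by simp
  qed
  have M: "\<alpha> < real (Suc (nat \<lceil>\<alpha>\<rceil>))" by linarith
  obtain c where c: "hasE (\<lambda>t. complex_of_real (t powr \<alpha>) * complex_of_real ((1 + 1 / t) powr \<alpha>)) c"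
    using hasE_series[OF Bd _ S M] unfolding r_def by auto
  have "eventually (\<lambda>t. complex_of_real (t powr \<alpha>) * complex_of_real ((1 + 1 / t) powr \<alpha>) = complex_of_real ((1 + t) powr \<alpha>)) at_top"
    using eventually_gt_at_top[of 0]
  proof eventually_elim
    case (elim t)
    have "t powr \<alpha> * (1 + 1 / t) powr \<alpha> = (t * (1 + 1 / t)) powr \<alpha>"
      using elim by (simp add: powr_mult)
    also have "t * (1 + 1 / t) = 1 + t" using elim by (simp add: field_simps)
    finally show ?case by (metis of_real_mult)
  qed
  then have "hasE (\<lambda>t. complex_of_real ((1 + t) powr \<alpha>)) c" by (rule hasE_ev[OF c])
  then show ?thesis by blast
qed



lemma hasE_t_ln1: "\<exists>c. hasE (\<lambda>t. complex_of_real (t powr real m) * complex_of_real (ln (1 + 1 / t))) c"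
proof -
  define a :: "nat \<Rightarrow> complex" where "a n = (-1) ^ Suc n / of_nat n" for n
  have Bd: "norm (a n) * 1 ^ n \<le> 1" for n
    unfolding a_def norm_divide norm_power norm_minus_cancel norm_one norm_of_nat by (cases n) auto
  have S: "(\<lambda>n. a n * complex_of_real u ^ n) sums complex_of_real (ln (1 + u))"
    if "0 < u" "u \<le> 1 / 2" for u
  proof -
    have "norm (complex_of_real u) < 1" using that by simp
    from Ln_series[OF this] have "(\<lambda>n. a n * complex_of_real u ^ n) sums Ln (1 + complex_of_real u)"
      unfolding a_def .
    moreover have "Ln (1 + complex_of_real u) = complex_of_real (ln (1 + u))"
      using that Ln_of_real[of "1 + u"] by simp
    ultimately show ?thesis by simp
  qed
  have M: "real m < real (Suc m)" by simp
  show ?thesis using hasE_series[OF Bd _ S M] by auto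
qed

lemma hasE_onepow_ln: "\<exists>c. hasE (\<lambda>t. complex_of_real ((1 + t) ^ l * ln (1 + t))) c"
proof -
  have "\<forall>m. \<exists>c. hasE (\<lambda>t. complex_of_real (t powr real m) * complex_of_real (ln (1 + 1 / t))) c"
    using hasE_t_ln1 by blast
  then obtain C where C: "\<And>m. hasE (\<lambda>t. complex_of_real (t powr real m) * complex_of_real (ln (1 + 1 / t))) (C m)"
    by metis
  have h: "hasE (\<lambda>t. \<Sum>m\<le>l. of_nat (l choose m) * (mon (real m) 1 t + complex_of_real (t powr real m) * complex_of_real (ln (1 + 1 / t))))
     (\<lambda>b j. \<Sum>m\<le>l. of_nat (l choose m) * ((if b = real m \<and> j = 1 then 1 else 0) + C m b j))"
    by (intro hasE_sum hasE_scale hasE_add hasE_mon C) auto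
  have ev: "eventually (\<lambda>t. (\<Sum>m\<le>l. of_nat (l choose m) * (mon (real m) 1 t + complex_of_real (t powr real m) * complex_of_real (ln (1 + 1 / t))))
     = complex_of_real ((1 + t) ^ l * ln (1 + t))) at_top"
    using eventually_gt_at_top[of 0]
  proof eventually_elim
    case (elim t)
    have l1: "ln (1 + t) = ln t + ln (1 + 1 / t)"
    proof -
      have e: "1 + t = t * (1 + 1 / t)" using elim by (simp add: field_simps)
      have "ln (t * (1 + 1 / t)) = ln t + ln (1 + 1 / t)" using elim by (intro ln_mult_pos) (auto intro: add_pos_pos)
      then show ?thesis by (simp only: e[symmetric])
    qed
    have b: "(1 + t) ^ l = (\<Sum>m\<le>l. real (l choose m) * t ^ m)"
      using binomial_ring[of t 1 l] by (simp add: add.commute mult.commute)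
    have "(1 + t) ^ l * ln (1 + t) = (\<Sum>m\<le>l. real (l choose m) * (t powr real m * ln t + t powr real m * ln (1 + 1 / t)))"
      unfolding b l1 sum_distrib_right using elim
      by (intro sum.cong refl) (simp add: powr_realpow algebra_simps)
    then have "complex_of_real ((1 + t) ^ l * ln (1 + t)) = (\<Sum>m\<le>l. of_nat (l choose m) * complex_of_real (t powr real m * ln t + t powr real m * ln (1 + 1 / t)))"
      by simp
    also have "\<dots> = (\<Sum>m\<le>l. of_nat (l choose m) * (mon (real m) 1 t + complex_of_real (t powr real m) * complex_of_real (ln (1 + 1 / t))))"
      unfolding mon_def by simp
    finally show ?case by simp
  qed
  have "hasE (\<lambda>t. complex_of_real ((1 + t) ^ l * ln (1 + t))) (\<lambda>b j. \<Sum>m\<le>l. of_nat (l choose m) * ((if b = real m \<and> j = 1 then 1 else 0) + C m b j))"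
    by (rule hasE_ev[OF h ev])
  then show ?thesis by blast
qed

lemma hasE_poly:
  "hasE (\<lambda>t. poly p (complex_of_real t)) (\<lambda>b j. \<Sum>m\<le>degree p. coeff p m * (if b = real m \<and> j = 0 then 1 else 0))"
proof -
  have h: "hasE (\<lambda>t. \<Sum>m\<le>degree p. coeff p m * mon (real m) 0 t) (\<lambda>b j. \<Sum>m\<le>degree p. coeff p m * (if b = real m \<and> j = 0 then 1 else 0))"
    by (intro hasE_sum hasE_scale hasE_mon) auto
  have ev: "eventually (\<lambda>t. (\<Sum>m\<le>degree p. coeff p m * mon (real m) 0 t) = poly p (complex_of_real t)) at_top"
    using eventually_gt_at_top[of 0]
  proof eventually_elim
    case (elim t)
    have "\<And>m. mon (real m) 0 t = complex_of_real t ^ m"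
      using elim by (simp add: mon_def powr_realpow)
    then show ?case by (simp add: poly_altdef)
  qed
  show ?thesis by (rule hasE_ev[OF h ev])
qed

lemma poly_coeff_at0:
  "(\<Sum>m\<le>d. (cf m :: complex) * (if 0 = real m \<and> k = 0 then 1 else 0)) = (if k = 0 then cf 0 else 0)"
proof -
  have "(\<Sum>m\<le>d. cf m * (if 0 = real m \<and> k = 0 then 1 else 0)) = (\<Sum>m\<le>d. if m = 0 then (if k = 0 then cf m else 0) else 0)"
    by (intro sum.cong refl) auto
  also have "\<dots> = (if k = 0 then cf 0 else 0)" by (simp add: sum.delta)
  finally show ?thesis .
qed

lemma hasE_const: "hasE (\<lambda>t. a) (\<lambda>b j. a * (if b = 0 \<and> j = 0 then 1 else 0))"
proof -
  have h: "hasE (\<lambda>t. a * mon 0 0 t) (\<lambda>b j. a * (if b = 0 \<and> j = 0 then 1 else 0))"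
    by (intro hasE_scale hasE_mon)
  have "eventually (\<lambda>t. a * mon 0 0 t = a) at_top"
    using eventually_gt_at_top[of 0] by eventually_elim (simp add: mon_def)
  then show ?thesis by (rule hasE_ev[OF h])
qed

lemma hasE_tpow: "hasE (\<lambda>t. complex_of_real t ^ k) (\<lambda>b j. if b = real k \<and> j = 0 then 1 else 0)"
proof -
  have "eventually (\<lambda>t. mon (real k) 0 t = complex_of_real t ^ k) at_top"
    using eventually_gt_at_top[of 0] by eventually_elim (simp add: mon_def powr_realpow)
  then show ?thesis by (rule hasE_ev[OF hasE_mon])
qed



lemma sector_Re:
  assumes "0 < c" "\<theta> < pi" "z \<in> sector c \<theta>"
  shows "Re z \<ge> c"
proof (cases "z = complex_of_real c")
  case True then show ?thesis by simp
next
  case False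
  then have ne: "z - complex_of_real c \<noteq> 0" by simp
  have "\<bar>Arg (z - complex_of_real c)\<bar> \<le> \<theta> / 2" using assms False unfolding sector_def by auto
  then have "cos (Arg (z - complex_of_real c)) \<ge> 0" using assms by (intro cos_ge_zero) auto
  moreover have "Re (z - complex_of_real c) = norm (z - complex_of_real c) * cos (Arg (z - complex_of_real c))"
    using cos_Arg[OF ne] ne by simp
  ultimately have "Re (z - complex_of_real c) \<ge> 0" by simp
  then show ?thesis by simp
qed

lemma neg_not_in_sector:
  assumes "0 < c" "\<theta> < pi" "w > 0"
  shows "- complex_of_real w \<notin> sector c \<theta>"
proof -
  have "- complex_of_real w \<noteq> complex_of_real c"
  proof
    assume "- complex_of_real w = complex_of_real c"
    then have "complex_of_real (- w) = complex_of_real c" by simp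
    then have "- w = c" by (simp only: of_real_eq_iff)
    then show False using assms by simp
  qed
  moreover have "- complex_of_real w - complex_of_real c = complex_of_real (- w - c)" by simp
  moreover have "Arg (complex_of_real (- w - c)) = pi" by (subst Arg_of_real) (use assms in simp)
  moreover have "\<not> \<bar>pi\<bar> \<le> \<theta> / 2"
  proof -
    have "\<bar>pi\<bar> = pi" by simp
    moreover have "0 < pi" by (rule pi_gt_zero)
    ultimately show ?thesis using assms(2) by linarith
  qed
  ultimately show ?thesis unfolding sector_def by auto
qed

lemma ln_div_re:
  assumes "Re x > 0" "Re y > 0"
  shows "ln (x / y) = ln x - ln y"
proof -
  have x0: "x \<noteq> 0" and y0: "y \<noteq> 0" using assms by auto
  have "\<bar>Im (ln x)\<bar> < pi / 2" "\<bar>Im (ln y)\<bar> < pi / 2" using assms Re_Ln_pos_lt_imp by auto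
  then have i1: "- pi < Im (ln x - ln y)" "Im (ln x - ln y) \<le> pi" by auto
  have "exp (ln x - ln y) = x / y" using x0 y0 by (simp add: exp_diff)
  then have "ln (x / y) = ln (exp (ln x - ln y))" by simp
  also have "\<dots> = ln x - ln y" using i1 by (rule Ln_exp)
  finally show ?thesis .
qed

lemma Re_real_div_pos:
  assumes "Re \<mu> > 0" "s > 0"
  shows "Re (complex_of_real s / \<mu>) > 0"
proof -
  have "(Re \<mu>)\<^sup>2 > 0" using assms by simp
  then have d: "(Re \<mu>)\<^sup>2 + (Im \<mu>)\<^sup>2 > 0" by (simp add: add_pos_nonneg)
  have "s * Re \<mu> > 0" using assms by simp
  then have "s * Re \<mu> / ((Re \<mu>)\<^sup>2 + (Im \<mu>)\<^sup>2) > 0" using d by (rule divide_pos_pos)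
  then show ?thesis by (simp add: Re_divide)
qed

definition lgterm :: "(nat \<Rightarrow> complex) \<Rightarrow> complex \<Rightarrow> nat \<Rightarrow> complex" where
  "lgterm S z n = ln (1 + z / S n) + (\<Sum>j=1..genus S. (-1) ^ j / of_nat j * (z / S n) ^ j)"

lemma logGamma_lgterm: "logGamma_seq S z = - suminf (lgterm S z)"
  unfolding logGamma_seq_def lgterm_def by simp

lemma log_tail:
  fixes u :: complex
  assumes "norm u \<le> 1 / 2"
  shows "norm (ln (1 + u) + (\<Sum>j=1..g. (-1) ^ j / of_nat j * u ^ j)) \<le> 2 * norm u ^ Suc g"
proof -
  define a :: "nat \<Rightarrow> complex" where "a n = (-1) ^ Suc n / of_nat n" for n
  have Bd: "norm (a n) * 1 ^ n \<le> 1" for n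
    unfolding a_def norm_divide norm_power norm_minus_cancel norm_one norm_of_nat by (cases n) auto
  have "norm u < 1" using assms by simp
  from Ln_series[OF this] have S: "(\<lambda>n. a n * u ^ n) sums ln (1 + u)" unfolding a_def .
  have b: "norm (ln (1 + u) - (\<Sum>n\<le>g. a n * u ^ n)) \<le> 2 * 1 * (norm u / 1) ^ Suc g"
    using assms by (intro ps_tail_bound[OF S Bd]) auto
  have "(\<Sum>n\<le>g. a n * u ^ n) = (\<Sum>n\<in>insert 0 {1..g}. a n * u ^ n)"
    by (intro sum.cong refl) auto
  also have "\<dots> = (\<Sum>n=1..g. a n * u ^ n)" by (simp add: a_def)
  also have "\<dots> = - (\<Sum>j=1..g. (-1) ^ j / of_nat j * u ^ j)"
    unfolding sum_negf[symmetric] by (intro sum.cong refl) (simp add: a_def)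
  finally show ?thesis using b by simp
qed

lemma lg_summable:
  assumes S0: "\<forall>n. S n \<noteq> 0" and sm: "summable (\<lambda>n. 1 / norm (S n) ^ Suc (genus S))"
  shows "summable (lgterm S z)"
proof -
  define g where "g = genus S"
  define K where "K = 2 * (norm z + 1)"
  have K0: "K > 0" unfolding K_def by (smt (verit) norm_ge_zero)
  have "(\<lambda>n. 1 / norm (S n) ^ Suc g) \<longlonglongrightarrow> 0" using summable_LIMSEQ_zero sm unfolding g_def by blast
  moreover have "(1 / K) ^ Suc g > 0" using K0 by simp
  ultimately have "eventually (\<lambda>n. 1 / norm (S n) ^ Suc g < (1 / K) ^ Suc g) sequentially"
    by (rule order_tendstoD(2))
  then have ev: "eventually (\<lambda>n. norm (lgterm S z n) \<le> 2 * norm z ^ Suc g * (1 / norm (S n) ^ Suc g)) sequentially"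
  proof eventually_elim
    case (elim n)
    have Sn: "norm (S n) > 0" using S0 by simp
    have "(1 / norm (S n)) ^ Suc g < (1 / K) ^ Suc g" using elim by (simp only: power_divide power_one)
    then have i1: "1 / norm (S n) < 1 / K" by (rule power_less_imp_less_base) (use K0 in simp)
    have "K < norm (S n)"
    proof (rule ccontr)
      assume "\<not> K < norm (S n)"
      then have "1 / K \<le> 1 / norm (S n)" using Sn K0 by (intro divide_left_mono) auto
      then show False using i1 by linarith
    qed
    then have "2 * norm z \<le> norm (S n)" unfolding K_def by (simp add: distrib_left)
    then have "norm z / norm (S n) \<le> 1 / 2" using Sn by (simp add: divide_le_eq)
    then have u: "norm (z / S n) \<le> 1 / 2" by (simp only: norm_divide)
    have "norm (lgterm S z n) \<le> 2 * norm (z / S n) ^ Suc g"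
      unfolding lgterm_def g_def by (rule log_tail[OF u])
    also have "\<dots> = 2 * norm z ^ Suc g * (1 / norm (S n) ^ Suc g)"
      by (simp add: norm_divide power_divide)
    finally show ?case .
  qed
  show ?thesis
    by (rule summable_comparison_test_ev[OF ev summable_mult[OF sm[folded g_def]]])
qed

lemma genus_summable:
  assumes s': "summable (\<lambda>n. norm (S n) powr (- s'))" and c: "c > 0" and lb: "\<And>n. norm (S n) \<ge> c"
  shows "summable (\<lambda>n. 1 / norm (S n) ^ Suc (genus S))"
proof -
  have lim: "(\<lambda>n. norm (S n) powr (- s')) \<longlonglongrightarrow> 0" using summable_LIMSEQ_zero[OF s'] .
  have spos: "s' > 0"
  proof (rule ccontr)
    assume "\<not> s' > 0"
    then have "\<And>n. norm (S n) powr (- s') \<ge> c powr (- s')"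
      using c lb by (intro powr_mono2) auto
    moreover have "c powr (- s') > 0" using c by simp
    ultimately have "eventually (\<lambda>n. norm (S n) powr (- s') \<ge> c powr (- s')) sequentially" by simp
    then have "0 \<ge> c powr (- s')" using lim by (intro tendsto_lowerbound[OF lim]) auto
    then show False using \<open>c powr (- s') > 0\<close> by simp
  qed
  define p where "p = nat \<lceil>s'\<rceil>"
  have ev: "eventually (\<lambda>n. norm (1 / norm (S n) ^ Suc p) \<le> norm (S n) powr (- s')) sequentially"
    using order_tendstoD(2)[OF lim zero_less_one]
  proof eventually_elim
    case (elim n)
    have Sn: "norm (S n) > 0" using lb[of n] c by linarith
    have "norm (S n) \<ge> 1"
    proof (rule ccontr)
      assume "\<not> norm (S n) \<ge> 1"
      then have "norm (S n) powr s' \<le> 1 powr s'" using Sn spos by (intro powr_mono2) auto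
      then have "norm (S n) powr s' \<le> 1" by simp
      then have "norm (S n) powr (- s') \<ge> 1" using Sn by (simp add: powr_minus field_simps)
      then show False using elim by simp
    qed
    have "norm (S n) powr s' \<le> norm (S n) powr real (Suc p)"
      using \<open>norm (S n) \<ge> 1\<close> unfolding p_def by (intro powr_mono) linarith+
    then have "norm (S n) powr s' \<le> norm (S n) ^ Suc p" by (simp only: powr_realpow[OF Sn])
    then have "1 / norm (S n) ^ Suc p \<le> 1 / norm (S n) powr s'"
      using Sn by (intro divide_left_mono) auto
    then show ?case using Sn by (simp add: powr_minus divide_inverse)
  qed
  have "summable (\<lambda>n. 1 / norm (S n) ^ Suc p)"
    by (rule summable_comparison_test_ev[OF ev s'])
  then have ex: "\<exists>p. summable (\<lambda>n. 1 / norm (S n) ^ (p + 1))" by auto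
  show ?thesis using LeastI_ex[OF ex] unfolding genus_def by simp
qed

lemma genus_cong:
  assumes "\<And>p. summable (\<lambda>n. 1 / norm (S n) ^ (p + 1)) \<longleftrightarrow> summable (\<lambda>n. 1 / norm (T n) ^ (p + 1))"
  shows "genus S = genus T"
  unfolding genus_def using assms by simp



definition lagr :: "nat \<Rightarrow> nat \<Rightarrow> complex poly" where
  "lagr g i = smult (1 / (\<Prod>k\<in>{..g}-{i}. (of_nat i - of_nat k))) (\<Prod>k\<in>{..g}-{i}. [:- of_nat k, 1:])"

lemma lagr_eval:
  assumes "i \<le> g" "i' \<le> g"
  shows "poly (lagr g i) (of_nat i') = (if i = i' then 1 else 0)"
proof (cases "i = i'")
  case True
  have "(\<Prod>k\<in>{..g}-{i}. (of_nat i - of_nat k :: complex)) \<noteq> 0"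
    by (subst prod_zero_iff) auto
  then show ?thesis using True unfolding lagr_def by (simp add: poly_prod)
next
  case False
  then have "i' \<in> {..g}-{i}" using assms by auto
  then have "(\<Prod>k\<in>{..g}-{i}. (of_nat i' - of_nat k :: complex)) = 0"
    by (subst prod_zero_iff) auto
  then show ?thesis using False unfolding lagr_def by (simp add: poly_prod)
qed

lemma lagr_degree:
  assumes "i \<le> g"
  shows "degree (lagr g i) \<le> g"
proof -
  have "degree (\<Prod>k\<in>{..g}-{i}. [:- of_nat k, 1:] :: complex poly) \<le> (\<Sum>k\<in>{..g}-{i}. degree ([:- of_nat k, 1:] :: complex poly))"
    using degree_prod_sum_le[of "{..g}-{i}" "\<lambda>k. [:- of_nat k, 1:] :: complex poly"] by (simp add: o_def)
  also have "\<dots> = card ({..g}-{i})" by simp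
  also have "\<dots> = g" using assms by simp
  finally show ?thesis unfolding lagr_def using degree_smult_le order_trans by blast
qed

lemma interp:
  fixes r :: "complex poly"
  assumes "degree r \<le> g"
  shows "r = (\<Sum>i\<le>g. smult (poly r (of_nat i)) (lagr g i))"
proof (rule poly_eqI_degree[where A = "of_nat ` {..g}"])
  fix x :: complex assume "x \<in> of_nat ` {..g}"
  then obtain i' where i': "i' \<le> g" "x = of_nat i'" by auto
  have "poly (\<Sum>i\<le>g. smult (poly r (of_nat i)) (lagr g i)) x = (\<Sum>i\<le>g. poly r (of_nat i) * (if i = i' then 1 else 0))"
    unfolding poly_sum poly_smult i'(2) by (intro sum.cong refl) (simp add: lagr_eval i'(1))
  also have "\<dots> = (\<Sum>i\<le>g. if i = i' then poly r (of_nat i) else 0)"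
    by (intro sum.cong refl) auto
  also have "\<dots> = poly r x" using i' by (simp add: sum.delta')
  finally show "poly r x = poly (\<Sum>i\<le>g. smult (poly r (of_nat i)) (lagr g i)) x" by simp
next
  have c: "card (of_nat ` {..g} :: complex set) = Suc g"
    by (subst card_image) (auto simp: inj_on_def)
  show "degree r < card (of_nat ` {..g} :: complex set)" using assms c by simp
  have "degree (\<Sum>i\<le>g. smult (poly r (of_nat i)) (lagr g i)) \<le> g"
    by (rule degree_sum_le) (auto intro!: order_trans[OF degree_smult_le] lagr_degree)
  then show "degree (\<Sum>i\<le>g. smult (poly r (of_nat i)) (lagr g i)) < card (of_nat ` {..g} :: complex set)"
    using c by simp
qed

lemma lagrange_sum:
  fixes q :: "nat \<Rightarrow> complex poly"
  assumes deg: "\<And>n. degree (q n) \<le> g" and sm: "\<And>i. i \<le> g \<Longrightarrow> summable (\<lambda>n. poly (q n) (of_nat i))"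
  shows "\<exists>p. \<forall>z. (\<lambda>n. poly (q n) z) sums poly p z"
proof -
  define p where "p = (\<Sum>i\<le>g. smult (\<Sum>n. poly (q n) (of_nat i)) (lagr g i))"
  have "(\<lambda>n. poly (q n) z) sums poly p z" for z
  proof -
    have e: "poly (q n) z = (\<Sum>i\<le>g. poly (q n) (of_nat i) * poly (lagr g i) z)" for n
      by (subst interp[OF deg[of n]]) (simp add: poly_sum)
    have "(\<lambda>n. \<Sum>i\<le>g. poly (q n) (of_nat i) * poly (lagr g i) z) sums (\<Sum>i\<le>g. (\<Sum>n. poly (q n) (of_nat i)) * poly (lagr g i) z)"
      by (intro sums_sum sums_mult2 summable_sums sm) auto
    moreover have "poly p z = (\<Sum>i\<le>g. (\<Sum>n. poly (q n) (of_nat i)) * poly (lagr g i) z)"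
      unfolding p_def by (simp add: poly_sum)
    ultimately show ?thesis unfolding e by simp
  qed
  then show ?thesis by blast
qed

lemma norm_add_real_ge:
  assumes "Re \<mu> \<ge> 0" "s \<ge> 0"
  shows "norm (complex_of_real s + \<mu>) \<ge> norm \<mu>"
proof -
  have "(norm \<mu>)\<^sup>2 = (Re \<mu>)\<^sup>2 + (Im \<mu>)\<^sup>2" by (simp add: cmod_power2)
  also have "\<dots> \<le> (s + Re \<mu>)\<^sup>2 + (Im \<mu>)\<^sup>2" using assms by (intro add_right_mono power_mono) auto
  also have "\<dots> = (norm (complex_of_real s + \<mu>))\<^sup>2" by (simp add: cmod_power2)
  finally show ?thesis by (rule power2_le_imp_le) simp
qed

definition qpoly :: "real \<Rightarrow> complex \<Rightarrow> nat \<Rightarrow> complex poly" where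
  "qpoly \<sigma> \<mu> g = (\<Sum>j=1..g. smult ((-1) ^ j / of_nat j)
      ([:0, complex_of_real \<sigma> / (complex_of_real \<sigma> + \<mu>):] ^ j
       - [:complex_of_real \<sigma> / \<mu>, complex_of_real \<sigma> / \<mu>:] ^ j + [:(complex_of_real \<sigma> / \<mu>) ^ j:]))"

lemma qpoly_degree: "degree (qpoly \<sigma> \<mu> g) \<le> g"
proof -
  have "degree (smult ((-1) ^ j / of_nat j)
      ([:0, complex_of_real \<sigma> / (complex_of_real \<sigma> + \<mu>):] ^ j
       - [:complex_of_real \<sigma> / \<mu>, complex_of_real \<sigma> / \<mu>:] ^ j + [:(complex_of_real \<sigma> / \<mu>) ^ j:])) \<le> g"
    if "j \<in> {1..g}" for j
  proof -
    have d1: "degree ([:0, complex_of_real \<sigma> / (complex_of_real \<sigma> + \<mu>):] ^ j) \<le> g"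
      using degree_power_le[of "[:0, complex_of_real \<sigma> / (complex_of_real \<sigma> + \<mu>):]" j] that
      by (auto intro: order_trans)
    have d2: "degree ([:complex_of_real \<sigma> / \<mu>, complex_of_real \<sigma> / \<mu>:] ^ j) \<le> g"
      using degree_power_le[of "[:complex_of_real \<sigma> / \<mu>, complex_of_real \<sigma> / \<mu>:]" j] that
      by (auto intro: order_trans)
    have d3: "degree [:(complex_of_real \<sigma> / \<mu>) ^ j:] \<le> g" by simp
    show ?thesis
      by (rule order_trans[OF degree_smult_le]) (intro degree_add_le degree_diff_le d1 d2 d3)
  qed
  then show ?thesis unfolding qpoly_def by (intro degree_sum_le) auto
qed

lemma qpoly_0: "poly (qpoly \<sigma> \<mu> g) 0 = 0"
  unfolding qpoly_def by (simp add: poly_sum poly_power)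

lemma lg_split:
  fixes \<sigma> t :: real and S2 St :: "nat \<Rightarrow> complex"
  assumes \<sigma>: "\<sigma> > 0" and t: "t \<ge> 0" and Re\<mu>: "Re (S2 n) > 0"
    and St: "St n = (complex_of_real \<sigma> + S2 n) / complex_of_real \<sigma>"
    and g: "genus St = genus S2"
  shows "lgterm St (complex_of_real t) n = lgterm S2 (complex_of_real (\<sigma> * (1 + t))) n
      - lgterm S2 (complex_of_real \<sigma>) n + poly (qpoly \<sigma> (S2 n) (genus S2)) (complex_of_real t)"
proof -
  define \<mu> where "\<mu> = S2 n"
  define A where "A = complex_of_real \<sigma> / (complex_of_real \<sigma> + \<mu>)"
  define B where "B = complex_of_real \<sigma> / \<mu>"
  have \<mu>0: "\<mu> \<noteq> 0" using Re\<mu> unfolding \<mu>_def by auto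
  have sm0: "complex_of_real \<sigma> + \<mu> \<noteq> 0"
  proof
    assume "complex_of_real \<sigma> + \<mu> = 0"
    then have "Re (complex_of_real \<sigma> + \<mu>) = 0" by simp
    then show False using \<sigma> Re\<mu> unfolding \<mu>_def by simp
  qed
  have s0: "complex_of_real \<sigma> \<noteq> 0" using \<sigma> by simp
  have tSt: "complex_of_real t / St n = complex_of_real t * A"
    unfolding St A_def \<mu>_def[symmetric] using sm0 s0 by (simp add: field_simps)
  have wB: "complex_of_real (\<sigma> * (1 + t)) / \<mu> = B * (1 + complex_of_real t)"
    unfolding B_def using \<mu>0 by (simp add: field_simps)
  have ReX: "Re (1 + complex_of_real (\<sigma> * (1 + t)) / \<mu>) > 0"
    using Re_real_div_pos[of \<mu> "\<sigma> * (1 + t)"] Re\<mu> \<sigma> t unfolding \<mu>_def by simp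
  have ReY: "Re (1 + complex_of_real \<sigma> / \<mu>) > 0"
    using Re_real_div_pos[of \<mu> \<sigma>] Re\<mu> \<sigma> unfolding \<mu>_def by simp
  have sm0': "\<mu> + complex_of_real \<sigma> \<noteq> 0" using sm0 by (simp add: add.commute)
  have e1: "(1 + complex_of_real t * A) * (1 + complex_of_real \<sigma> / \<mu>) = 1 + complex_of_real (\<sigma> * (1 + t)) / \<mu>"
  proof -
    define D where "D = complex_of_real \<sigma> + \<mu>"
    define X where "X = D + complex_of_real t * complex_of_real \<sigma>"
    have D0: "D \<noteq> 0" using sm0 unfolding D_def .
    have a1: "1 + complex_of_real t * A = X / D"
      unfolding A_def X_def D_def[symmetric] using D0 by (simp add: field_simps)
    have a2: "1 + complex_of_real \<sigma> / \<mu> = D / \<mu>"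
      unfolding D_def using \<mu>0 by (simp add: field_simps)
    have a3: "1 + complex_of_real (\<sigma> * (1 + t)) / \<mu> = X / \<mu>"
      unfolding X_def D_def using \<mu>0 by (simp add: field_simps)
    show ?thesis unfolding a1 a2 a3 using D0 \<mu>0 by simp
  qed
  have Y0: "1 + complex_of_real \<sigma> / \<mu> \<noteq> 0"
  proof
    assume "1 + complex_of_real \<sigma> / \<mu> = 0"
    then have "Re (1 + complex_of_real \<sigma> / \<mu>) = 0" by (simp only: zero_complex.sel)
    then show False using ReY by linarith
  qed
  have xy: "(1 + complex_of_real (\<sigma> * (1 + t)) / \<mu>) / (1 + complex_of_real \<sigma> / \<mu>) = 1 + complex_of_real t * A"
    unfolding e1[symmetric] using Y0 by simp
  have lnid: "ln (1 + complex_of_real t * A) = ln (1 + complex_of_real (\<sigma> * (1 + t)) / \<mu>) - ln (1 + complex_of_real \<sigma> / \<mu>)"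
    using ln_div_re[OF ReX ReY] unfolding xy .
  have pq: "poly (qpoly \<sigma> \<mu> (genus S2)) (complex_of_real t) =
     (\<Sum>j=1..genus S2. (-1) ^ j / of_nat j * ((complex_of_real t * A) ^ j - (B * (1 + complex_of_real t)) ^ j + B ^ j))"
    unfolding qpoly_def poly_sum poly_smult A_def B_def
    by (intro sum.cong refl) (simp add: poly_power mult_ac algebra_simps add_divide_distrib)
  show ?thesis
    unfolding lgterm_def g tSt \<mu>_def[symmetric] lnid wB pq B_def[symmetric]
    by (simp add: sum.distrib[symmetric] sum_subtractf[symmetric] algebra_simps)
qed



definition hasV :: "(real \<Rightarrow> complex) \<Rightarrow> nat \<Rightarrow> complex \<Rightarrow> bool" where
  "hasV g k v \<longleftrightarrow> (\<exists>c. hasE g c \<and> c 0 k = v)"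

lemma hasV_add: "hasV f k v \<Longrightarrow> hasV g k w \<Longrightarrow> hasV (\<lambda>t. f t + g t) k (v + w)"
  unfolding hasV_def using hasE_add by fastforce

lemma hasV_scale: "hasV f k v \<Longrightarrow> hasV (\<lambda>t. a * f t) k (a * v)"
  unfolding hasV_def using hasE_scale by fastforce

lemma hasV_neg: "hasV f k v \<Longrightarrow> hasV (\<lambda>t. - f t) k (- v)"
  using hasV_scale[of f k v "-1"] by simp

lemma hasV_diff: "hasV f k v \<Longrightarrow> hasV g k w \<Longrightarrow> hasV (\<lambda>t. f t - g t) k (v - w)"
  using hasV_add[OF _ hasV_neg, of f k v g w] by simp

lemma hasV_sum:
  assumes "finite I" "\<And>i. i \<in> I \<Longrightarrow> hasV (f i) k (v i)"
  shows "hasV (\<lambda>t. \<Sum>i\<in>I. f i t) k (\<Sum>i\<in>I. v i)"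
  using assms
proof (induction I rule: finite_induct)
  case empty
  then show ?case unfolding hasV_def using hasE_zero by fastforce
next
  case (insert x F)
  then show ?case using hasV_add[of "f x" k "v x" "\<lambda>t. \<Sum>i\<in>F. f i t" "\<Sum>i\<in>F. v i"] by simp
qed

lemma hasV_ev: "hasV f k v \<Longrightarrow> eventually (\<lambda>t. f t = g t) at_top \<Longrightarrow> hasV g k v"
  unfolding hasV_def using hasE_ev by blast

lemma hasV_lim0: "(f \<longlongrightarrow> 0) at_top \<Longrightarrow> hasV f k 0"
  unfolding hasV_def using hasE_lim0 by fastforce

lemma hasV_const: "hasV (\<lambda>t. a) k (if k = 0 then a else 0)"
  unfolding hasV_def using hasE_const[of a] by fastforce

lemma hasV_poly: "hasV (\<lambda>t. poly p (complex_of_real t)) k (if k = 0 then poly p 0 else 0)"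
proof -
  have "(\<Sum>m\<le>degree p. coeff p m * (if 0 = real m \<and> k = 0 then 1 else 0)) = (if k = 0 then coeff p 0 else 0)"
    by (rule poly_coeff_at0)
  then show ?thesis unfolding hasV_def using hasE_poly[of p] by (auto simp: poly_0_coeff_0)
qed

lemma hasV_tpow: "m \<ge> 1 \<Longrightarrow> hasV (\<lambda>t. complex_of_real t ^ m) k 0"
  unfolding hasV_def using hasE_tpow[of m] by fastforce

lemma hasV_unique: "hasV f k v \<Longrightarrow> hasV f k w \<Longrightarrow> v = w"
  unfolding hasV_def using hasE_unique by metis

lemma hasV_cc: "hasV (\<lambda>t. f (- complex_of_real t)) k v \<Longrightarrow> const_coeff f k = v"
  unfolding hasV_def using const_coeff_hasE by metis

lemma hasV_of_ex: "\<exists>c. hasE (\<lambda>t. f (- complex_of_real t)) c \<Longrightarrow> hasV (\<lambda>t. f (- complex_of_real t)) k (const_coeff f k)"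
  unfolding hasV_def using const_coeff_hasE by metis

lemma ex_of_hasV: "hasV f k v \<Longrightarrow> \<exists>c. hasE f c"
  unfolding hasV_def by blast

lemma hasV_Ksum: "hasV (\<lambda>t. \<Sum>m=1..p0. K m * complex_of_real t ^ m) k 0"
proof -
  have "hasV (\<lambda>t. \<Sum>m\<in>{1..p0}. K m * complex_of_real t ^ m) k (\<Sum>m\<in>{1..p0}. K m * 0)"
    by (intro hasV_sum hasV_scale hasV_tpow) auto
  then show ?thesis by simp
qed



lemma summable_inv_pow_compare:
  fixes x y :: "nat \<Rightarrow> real" and C :: real
  assumes xpos: "\<And>n. x n > 0" and yx: "\<And>n. y n \<ge> x n / C" and C: "C > 0"
    and sx: "summable (\<lambda>n. 1 / x n ^ m)"
  shows "summable (\<lambda>n. 1 / y n ^ m)"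
proof (rule summable_comparison_test_ev[OF _ summable_mult[OF sx, of "C ^ m"]])
  show "eventually (\<lambda>n. norm (1 / y n ^ m) \<le> C ^ m * (1 / x n ^ m)) sequentially"
  proof (rule always_eventually, rule allI)
    fix n
    have xp: "x n / C > 0" using xpos[of n] C by simp
    have yp: "y n > 0" using xp yx[of n] by linarith
    have "(x n / C) ^ m \<le> y n ^ m" using xp yx[of n] by (intro power_mono) auto
    then have "1 / y n ^ m \<le> 1 / (x n / C) ^ m" using xp yp by (intro divide_left_mono) auto
    also have "\<dots> = C ^ m * (1 / x n ^ m)" using C xpos[of n] by (simp add: power_divide)
    finally show "norm (1 / y n ^ m) \<le> C ^ m * (1 / x n ^ m)" using yp by simp
  qed
qed

lemma smallo_bounded_tendsto:
  fixes f :: "'a \<Rightarrow> complex"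
  assumes "f \<in> o[F](g)" "eventually (\<lambda>x. norm (g x) \<le> 1) F"
  shows "(f \<longlongrightarrow> 0) F"
proof (rule tendstoI)
  fix e :: real assume e: "e > 0"
  have "eventually (\<lambda>x. norm (f x) \<le> e / 2 * norm (g x)) F"
    using landau_o.smallD[OF assms(1), of "e / 2"] e by simp
  then show "eventually (\<lambda>x. dist (f x) 0 < e) F" using assms(2)
  proof eventually_elim
    case (elim x)
    have h: "e / 2 * norm (g x) \<le> e / 2" using elim(2) e by (simp add: mult_left_le)
    have "norm (f x) \<le> e / 2" using elim(1) h by linarith
    then show ?case using e by simp
  qed
qed



lemma per_n1:
  fixes \<sigma> :: real and S2 :: "nat \<Rightarrow> complex" and c2 \<theta>2 :: real
    and a2 :: "real \<Rightarrow> nat \<Rightarrow> complex" and \<alpha>2 :: "nat \<Rightarrow> real"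
    and N2 l0 p2 p0 k :: nat and K0 K2 :: "nat \<Rightarrow> nat \<Rightarrow> complex"
  assumes \<sigma>: "\<sigma> > 0"
    and S2nz: "\<forall>n. S2 n \<noteq> 0"
    and c2: "0 < c2" "\<theta>2 < pi" and Re2: "\<And>n. Re (S2 n) \<ge> c2"
    and sm2: "summable (\<lambda>n. 1 / norm (S2 n) ^ Suc (genus S2))"
    and oc: "(\<lambda>x. logGamma_seq S2 (- x)
              - (\<Sum>h\<le>N2. a2 (\<alpha>2 h) 0 * (- x) powr complex_of_real (\<alpha>2 h))
              - (\<Sum>j\<le>p2. a2 (real j) 1 * (- x) ^ j * ln (- x)))
        \<in> o[outside_sector c2 \<theta>2](\<lambda>x. (- x) powr complex_of_real (\<alpha>2 N2))"
    and ordN: "\<alpha>2 N2 \<le> 0"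
    and l0: "l0 \<le> N2" and neg: "\<And>h. l0 < h \<Longrightarrow> h \<le> N2 \<Longrightarrow> \<alpha>2 h < 0"
  shows "const_coeff (\<lambda>x. logGamma_seq (\<lambda>n2. (complex_of_real \<sigma> + S2 n2) / complex_of_real \<sigma>) (- x)) k
      - ((\<Sum>h\<le>l0. const_coeff (\<lambda>x. a2 (\<alpha>2 h) 0 * ((1 - x) powr complex_of_real (\<alpha>2 h) - 1)
                    - (\<Sum>m=1..p0. K0 m h * (- x) ^ m)) k * complex_of_real (\<sigma> powr \<alpha>2 h))
       + (\<Sum>l\<le>p2. const_coeff (\<lambda>x. a2 (real l) 1 * (1 - x) ^ l * ln (1 - x)
                    - (\<Sum>m=1..p0. K2 m l * (- x) ^ m)) k * complex_of_real (\<sigma> ^ l)))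
   = (if k = 0 then - logGamma_seq S2 (complex_of_real \<sigma>)
        + (\<Sum>j\<le>p2. a2 (real j) 1 * complex_of_real (\<sigma> ^ j * ln \<sigma>))
        + (\<Sum>h\<le>l0. a2 (\<alpha>2 h) 0 * complex_of_real (\<sigma> powr \<alpha>2 h)) else 0)"
proof -
  define St where "St = (\<lambda>n2. (complex_of_real \<sigma> + S2 n2) / complex_of_real \<sigma>)"
  define g where "g = genus S2"
  define LG2 where "LG2 = logGamma_seq S2"
  define \<phi>t where "\<phi>t = (\<lambda>h x. a2 (\<alpha>2 h) 0 * ((1 - x) powr complex_of_real (\<alpha>2 h) - 1)
                    - (\<Sum>m=1..p0. K0 m h * (- x) ^ m))"
  define \<phi>h where "\<phi>h = (\<lambda>l x. a2 (real l) 1 * (1 - x) ^ l * ln (1 - x)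
                    - (\<Sum>m=1..p0. K2 m l * (- x) ^ m))"
  have Sn: "norm (S2 n) \<ge> c2" for n using Re2[of n] complex_Re_le_cmod[of "S2 n"] by linarith
  have Snpos: "norm (S2 n) > 0" for n using Sn[of n] c2 by linarith
  have Re2pos: "Re (S2 n) > 0" for n using Re2[of n] c2 by linarith
  define Kc where "Kc = (\<sigma> / c2 + 1) / \<sigma>"
  have Kc: "Kc > 0" unfolding Kc_def using \<sigma> c2 by (simp add: add_pos_pos)
  have Stlow: "norm (St n) \<ge> norm (S2 n) / \<sigma>" for n
  proof -
    have "norm (complex_of_real \<sigma> + S2 n) \<ge> norm (S2 n)"
      using Re2pos[of n] \<sigma> by (intro norm_add_real_ge) auto
    then show ?thesis unfolding St_def norm_divide using \<sigma> by (simp add: divide_right_mono)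
  qed
  have Stup: "norm (S2 n) \<ge> norm (St n) / Kc" for n
  proof -
    have "norm (complex_of_real \<sigma> + S2 n) \<le> \<sigma> + norm (S2 n)"
      using norm_triangle_ineq[of "complex_of_real \<sigma>" "S2 n"] \<sigma> by simp
    also have "\<sigma> \<le> \<sigma> / c2 * norm (S2 n)"
    proof -
      have "\<sigma> / c2 * c2 \<le> \<sigma> / c2 * norm (S2 n)" using Sn[of n] \<sigma> c2 by (intro mult_left_mono) auto
      then show ?thesis using c2 by simp
    qed
    then have "\<sigma> + norm (S2 n) \<le> (\<sigma> / c2 + 1) * norm (S2 n)" by (simp add: algebra_simps)
    finally have "norm (St n) \<le> Kc * norm (S2 n)"
      unfolding St_def norm_divide Kc_def using \<sigma> by (simp add: divide_right_mono field_simps)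
    then show ?thesis using Kc by (simp add: field_simps)
  qed
  have Stpos: "norm (St n) > 0" for n using Stlow[of n] Snpos[of n] \<sigma>
    by (smt (verit) divide_pos_pos)
  have Stnz: "\<forall>n. St n \<noteq> 0" using Stpos by auto
  have gSt: "genus St = genus S2"
  proof (rule genus_cong)
    fix p
    show "summable (\<lambda>n. 1 / norm (St n) ^ (p + 1)) \<longleftrightarrow> summable (\<lambda>n. 1 / norm (S2 n) ^ (p + 1))"
    proof
      assume "summable (\<lambda>n. 1 / norm (St n) ^ (p + 1))"
      then show "summable (\<lambda>n. 1 / norm (S2 n) ^ (p + 1))"
        using summable_inv_pow_compare[where x="\<lambda>n. norm (St n)" and y="\<lambda>n. norm (S2 n)" and C=Kc and m="p + 1"] Stpos Stup Kc by blast
    next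
      assume "summable (\<lambda>n. 1 / norm (S2 n) ^ (p + 1))"
      then show "summable (\<lambda>n. 1 / norm (St n) ^ (p + 1))"
        using summable_inv_pow_compare[where x="\<lambda>n. norm (S2 n)" and y="\<lambda>n. norm (St n)" and C=\<sigma> and m="p + 1"] Snpos Stlow \<sigma> by blast
    qed
  qed
  have smSt: "summable (\<lambda>n. 1 / norm (St n) ^ Suc (genus St))"
    using summable_inv_pow_compare[where x="\<lambda>n. norm (S2 n)" and y="\<lambda>n. norm (St n)" and C=\<sigma> and m="Suc (genus S2)"] Snpos Stlow \<sigma> sm2
    unfolding gSt by blast
  have sumSt: "summable (lgterm St z)" for z by (rule lg_summable[OF Stnz smSt])
  have sumS2: "summable (lgterm S2 z)" for z by (rule lg_summable[OF S2nz sm2])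
  have split: "lgterm St (complex_of_real t) n = lgterm S2 (complex_of_real (\<sigma> * (1 + t))) n
      - lgterm S2 (complex_of_real \<sigma>) n + poly (qpoly \<sigma> (S2 n) g) (complex_of_real t)" if "t \<ge> 0" for t n
    unfolding g_def by (rule lg_split[OF \<sigma> that Re2pos]) (auto simp: St_def gSt[unfolded St_def])
  have Qeq: "poly (qpoly \<sigma> (S2 n) g) (complex_of_real t) = lgterm St (complex_of_real t) n
      - lgterm S2 (complex_of_real (\<sigma> * (1 + t))) n + lgterm S2 (complex_of_real \<sigma>) n" if "t \<ge> 0" for t n
    using split[OF that, of n] by simp
  have Qsum: "summable (\<lambda>n. poly (qpoly \<sigma> (S2 n) g) (complex_of_real t))" if "t \<ge> 0" for t
    unfolding Qeq[OF that] by (intro summable_add summable_diff sumSt sumS2)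
  obtain p where p: "\<And>z. (\<lambda>n. poly (qpoly \<sigma> (S2 n) g) z) sums poly p z"
  proof -
    have "\<exists>p. \<forall>z. (\<lambda>n. poly (qpoly \<sigma> (S2 n) g) z) sums poly p z"
    proof (rule lagrange_sum[OF qpoly_degree])
      fix i assume "i \<le> g"
      show "summable (\<lambda>n. poly (qpoly \<sigma> (S2 n) g) (of_nat i))"
        using Qsum[of "real i"] by simp
    qed
    then show ?thesis using that by blast
  qed
  have p0: "poly p 0 = 0"
  proof -
    have "(\<lambda>n. poly (qpoly \<sigma> (S2 n) g) 0) sums 0" by (simp add: qpoly_0)
    then show ?thesis using p[of 0] sums_unique2 by blast
  qed
  have Geq: "logGamma_seq St (complex_of_real t) = LG2 (complex_of_real (\<sigma> * (1 + t))) - LG2 (complex_of_real \<sigma>)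
      - poly p (complex_of_real t)" if "t \<ge> 0" for t
  proof -
    have "suminf (lgterm St (complex_of_real t)) = (\<Sum>n. lgterm S2 (complex_of_real (\<sigma> * (1 + t))) n
      - lgterm S2 (complex_of_real \<sigma>) n + poly (qpoly \<sigma> (S2 n) g) (complex_of_real t))"
      by (rule arg_cong[where f=suminf], rule ext, rule split[OF that])
    also have "\<dots> = suminf (lgterm S2 (complex_of_real (\<sigma> * (1 + t)))) - suminf (lgterm S2 (complex_of_real \<sigma>))
       + poly p (complex_of_real t)"
      using sums_unique[OF p[of "complex_of_real t"]]
      by (subst suminf_add[symmetric]) (auto intro!: summable_diff sumS2 Qsum that simp: suminf_diff sumS2)
    finally show ?thesis unfolding logGamma_lgterm LG2_def by simp
  qed
  define W where "W t = complex_of_real (\<sigma> * (1 + t))" for t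
  define R where "R t = LG2 (W t) - (\<Sum>h\<le>N2. a2 (\<alpha>2 h) 0 * W t powr complex_of_real (\<alpha>2 h))
      - (\<Sum>j\<le>p2. a2 (real j) 1 * W t ^ j * ln (W t))" for t
  have filt: "filterlim (\<lambda>t. - W t) (outside_sector c2 \<theta>2) at_top"
    unfolding outside_sector_def filterlim_inf filterlim_principal
  proof
    have "filterlim (\<lambda>t. \<bar>\<sigma> * (1 + t)\<bar>) at_top at_top" using \<sigma> by real_asymp
    then show "filterlim (\<lambda>t. - W t) at_infinity at_top"
      unfolding filterlim_at_infinity_conv_norm_at_top W_def norm_minus_cancel norm_of_real .
    show "eventually (\<lambda>t. - W t \<in> - sector c2 \<theta>2) at_top"
      using eventually_gt_at_top[of 0]
    proof eventually_elim
      case (elim t)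
      have pos: "\<sigma> * (1 + t) > 0" using \<sigma> elim by simp
      show ?case using neg_not_in_sector[OF c2 pos] unfolding W_def by simp
    qed
  qed
  have Ro: "R \<in> o[at_top](\<lambda>t. W t powr complex_of_real (\<alpha>2 N2))"
    using landau_o.small.compose[OF oc filt, unfolded minus_minus] unfolding R_def LG2_def .
  have R0: "(R \<longlongrightarrow> 0) at_top"
  proof (rule smallo_bounded_tendsto[OF Ro])
    show "eventually (\<lambda>t. norm (W t powr complex_of_real (\<alpha>2 N2)) \<le> 1) at_top"
      using eventually_ge_at_top[of "1 / \<sigma>"]
    proof eventually_elim
      case (elim t)
      have t0: "t > 0" using elim \<sigma> by (smt (verit) divide_pos_pos)
      have "\<sigma> * t \<ge> 1" using elim \<sigma> by (simp add: field_simps)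
      then have ge1: "\<sigma> * (1 + t) \<ge> 1" using \<sigma> by (simp add: algebra_simps)
      have "W t powr complex_of_real (\<alpha>2 N2) = complex_of_real ((\<sigma> * (1 + t)) powr \<alpha>2 N2)"
        unfolding W_def using ge1 by (intro powr_of_real) simp
      moreover have "(\<sigma> * (1 + t)) powr \<alpha>2 N2 \<le> (\<sigma> * (1 + t)) powr 0"
        using ge1 ordN by (intro powr_mono) auto
      moreover have "(\<sigma> * (1 + t)) powr 0 = 1" using \<sigma> t0 by simp
      ultimately show ?case using ge1 by simp
    qed
  qed
  define KT0 where "KT0 h t = (\<Sum>m=1..p0. K0 m h * complex_of_real t ^ m)" for h t
  define KT2 where "KT2 j t = (\<Sum>m=1..p0. K2 m j * complex_of_real t ^ m)" for j t
  have opt: "1 - - complex_of_real t = complex_of_real (1 + t)" for t by simp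
  have Phit_eq: "\<phi>t h (- complex_of_real t) = a2 (\<alpha>2 h) 0 * (complex_of_real ((1 + t) powr \<alpha>2 h) - 1) - KT0 h t"
    if "t > 0" for h t
  proof -
    have e: "complex_of_real (1 + t) powr complex_of_real (\<alpha>2 h) = complex_of_real ((1 + t) powr \<alpha>2 h)"
      using that by (intro powr_of_real) simp
    show ?thesis unfolding \<phi>t_def KT0_def opt minus_minus e ..
  qed
  have Phih_eq: "\<phi>h j (- complex_of_real t) = a2 (real j) 1 * complex_of_real ((1 + t) ^ j * ln (1 + t)) - KT2 j t"
    if "t > 0" for j t
  proof -
    have e: "ln (complex_of_real (1 + t)) = complex_of_real (ln (1 + t))"
      using that by (intro Ln_of_real) simp
    show ?thesis unfolding \<phi>h_def KT2_def opt minus_minus e by simp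
  qed
  have hid: "a2 (\<alpha>2 h) 0 * W t powr complex_of_real (\<alpha>2 h)
      = complex_of_real (\<sigma> powr \<alpha>2 h) * (\<phi>t h (- complex_of_real t) + a2 (\<alpha>2 h) 0 + KT0 h t)"
    if "t > 0" for h t
  proof -
    have "W t powr complex_of_real (\<alpha>2 h) = complex_of_real ((\<sigma> * (1 + t)) powr \<alpha>2 h)"
      unfolding W_def using that \<sigma> by (intro powr_of_real) simp
    also have "\<dots> = complex_of_real (\<sigma> powr \<alpha>2 h) * complex_of_real ((1 + t) powr \<alpha>2 h)"
      using that \<sigma> by (simp add: powr_mult)
    finally show ?thesis unfolding Phit_eq[OF that] by (simp add: algebra_simps)
  qed
  have jid: "a2 (real j) 1 * W t ^ j * ln (W t)
      = complex_of_real (\<sigma> ^ j) * (\<phi>h j (- complex_of_real t) + KT2 j t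
          + a2 (real j) 1 * complex_of_real (ln \<sigma>) * poly ([:1, 1:] ^ j) (complex_of_real t))"
    if "t > 0" for j t
  proof -
    have w1: "W t ^ j = complex_of_real (\<sigma> ^ j) * complex_of_real ((1 + t) ^ j)"
      unfolding W_def by (simp add: power_mult_distrib)
    have w2: "ln (W t) = complex_of_real (ln \<sigma>) + complex_of_real (ln (1 + t))"
    proof -
      have "ln (W t) = complex_of_real (ln (\<sigma> * (1 + t)))"
        unfolding W_def using that \<sigma> by (intro Ln_of_real) simp
      also have "ln (\<sigma> * (1 + t)) = ln \<sigma> + ln (1 + t)" using that \<sigma> by (intro ln_mult_pos) auto
      finally show ?thesis by simp
    qed
    have w3: "poly ([:1, 1:] ^ j) (complex_of_real t) = complex_of_real ((1 + t) ^ j)"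
      by (simp add: poly_power)
    show ?thesis unfolding Phih_eq[OF that] w1 w2 w3 by (simp add: algebra_simps)
  qed
  define RHS where "RHS t = R t
      + (\<Sum>h\<le>N2. complex_of_real (\<sigma> powr \<alpha>2 h) * (\<phi>t h (- complex_of_real t) + a2 (\<alpha>2 h) 0 + KT0 h t))
      + (\<Sum>j\<le>p2. complex_of_real (\<sigma> ^ j) * (\<phi>h j (- complex_of_real t) + KT2 j t
          + a2 (real j) 1 * complex_of_real (ln \<sigma>) * poly ([:1, 1:] ^ j) (complex_of_real t)))
      - LG2 (complex_of_real \<sigma>) - poly p (complex_of_real t)" for t
  have evG: "eventually (\<lambda>t. RHS t = logGamma_seq St (- (- complex_of_real t))) at_top"
    using eventually_gt_at_top[of 0]
  proof eventually_elim
    case (elim t)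
    have "logGamma_seq St (- (- complex_of_real t)) = LG2 (W t) - LG2 (complex_of_real \<sigma>) - poly p (complex_of_real t)"
      using Geq[of t] elim unfolding W_def by simp
    also have "LG2 (W t) = R t + (\<Sum>h\<le>N2. a2 (\<alpha>2 h) 0 * W t powr complex_of_real (\<alpha>2 h))
      + (\<Sum>j\<le>p2. a2 (real j) 1 * W t ^ j * ln (W t))"
      unfolding R_def by simp
    also have "(\<Sum>h\<le>N2. a2 (\<alpha>2 h) 0 * W t powr complex_of_real (\<alpha>2 h))
      = (\<Sum>h\<le>N2. complex_of_real (\<sigma> powr \<alpha>2 h) * (\<phi>t h (- complex_of_real t) + a2 (\<alpha>2 h) 0 + KT0 h t))"
      by (intro sum.cong refl hid elim)
    also have "(\<Sum>j\<le>p2. a2 (real j) 1 * W t ^ j * ln (W t))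
      = (\<Sum>j\<le>p2. complex_of_real (\<sigma> ^ j) * (\<phi>h j (- complex_of_real t) + KT2 j t
          + a2 (real j) 1 * complex_of_real (ln \<sigma>) * poly ([:1, 1:] ^ j) (complex_of_real t)))"
      by (intro sum.cong refl jid elim)
    finally show ?case unfolding RHS_def by simp
  qed
  define ind :: complex where "ind = (if k = 0 then 1 else 0)"
  define cT where "cT h = const_coeff (\<phi>t h) k" for h
  define cH where "cH j = const_coeff (\<phi>h j) k" for j
  have VT: "hasV (\<lambda>t. \<phi>t h (- complex_of_real t)) k (cT h)" for h
  proof -
    obtain c where c: "hasE (\<lambda>t. complex_of_real ((1 + t) powr \<alpha>2 h)) c" using hasE_onepow by blast
    have X: "hasV (\<lambda>t. complex_of_real ((1 + t) powr \<alpha>2 h)) k (c 0 k)" using c unfolding hasV_def by blast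
    have "hasV (\<lambda>t. a2 (\<alpha>2 h) 0 * (complex_of_real ((1 + t) powr \<alpha>2 h) - 1) - KT0 h t) k
        (a2 (\<alpha>2 h) 0 * (c 0 k - (if k = 0 then 1 else 0)) - 0)"
      unfolding KT0_def by (intro hasV_diff hasV_scale hasV_const hasV_Ksum X)
    moreover have "eventually (\<lambda>t. a2 (\<alpha>2 h) 0 * (complex_of_real ((1 + t) powr \<alpha>2 h) - 1) - KT0 h t
        = \<phi>t h (- complex_of_real t)) at_top"
      using eventually_gt_at_top[of 0] by eventually_elim (simp add: Phit_eq)
    ultimately have "hasV (\<lambda>t. \<phi>t h (- complex_of_real t)) k (a2 (\<alpha>2 h) 0 * (c 0 k - (if k = 0 then 1 else 0)) - 0)"
      by (rule hasV_ev)
    then have "\<exists>c. hasE (\<lambda>t. \<phi>t h (- complex_of_real t)) c" by (rule ex_of_hasV)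
    from hasV_of_ex[OF this] show ?thesis unfolding cT_def .
  qed
  have VH: "hasV (\<lambda>t. \<phi>h j (- complex_of_real t)) k (cH j)" for j
  proof -
    obtain c where c: "hasE (\<lambda>t. complex_of_real ((1 + t) ^ j * ln (1 + t))) c" using hasE_onepow_ln by blast
    have X: "hasV (\<lambda>t. complex_of_real ((1 + t) ^ j * ln (1 + t))) k (c 0 k)" using c unfolding hasV_def by blast
    have "hasV (\<lambda>t. a2 (real j) 1 * complex_of_real ((1 + t) ^ j * ln (1 + t)) - KT2 j t) k
        (a2 (real j) 1 * c 0 k - 0)"
      unfolding KT2_def by (intro hasV_diff hasV_scale hasV_Ksum X)
    moreover have "eventually (\<lambda>t. a2 (real j) 1 * complex_of_real ((1 + t) ^ j * ln (1 + t)) - KT2 j t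
        = \<phi>h j (- complex_of_real t)) at_top"
      using eventually_gt_at_top[of 0] by eventually_elim (simp add: Phih_eq)
    ultimately have "hasV (\<lambda>t. \<phi>h j (- complex_of_real t)) k (a2 (real j) 1 * c 0 k - 0)"
      by (rule hasV_ev)
    then have "\<exists>c. hasE (\<lambda>t. \<phi>h j (- complex_of_real t)) c" by (rule ex_of_hasV)
    from hasV_of_ex[OF this] show ?thesis unfolding cH_def .
  qed
  define V where "V = 0 + (\<Sum>h\<le>N2. complex_of_real (\<sigma> powr \<alpha>2 h) * (cT h + (if k = 0 then a2 (\<alpha>2 h) 0 else 0) + 0))
      + (\<Sum>j\<le>p2. complex_of_real (\<sigma> ^ j) * (cH j + 0
          + a2 (real j) 1 * complex_of_real (ln \<sigma>) * (if k = 0 then poly ([:1, 1:] ^ j) 0 else 0)))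
      - (if k = 0 then LG2 (complex_of_real \<sigma>) else 0) - (if k = 0 then poly p 0 else 0)"
  have HV: "hasV RHS k V"
    unfolding RHS_def V_def KT0_def KT2_def
    by (intro hasV_diff hasV_add hasV_sum hasV_scale hasV_lim0[OF R0] VT VH hasV_const hasV_poly hasV_Ksum finite_atMost)
  have a0: "const_coeff (\<lambda>x. logGamma_seq St (- x)) k = V"
    by (rule hasV_cc) (rule hasV_ev[OF HV evG])
  have cTneg: "cT h = - (a2 (\<alpha>2 h) 0 * ind)" if "l0 < h" "h \<le> N2" for h
  proof -
    have ah: "\<alpha>2 h < 0" using neg[OF that] .
    have "((\<lambda>t. (1 + t) powr \<alpha>2 h) \<longlongrightarrow> 0) at_top" using ah by real_asymp
    then have "((\<lambda>t. complex_of_real ((1 + t) powr \<alpha>2 h)) \<longlongrightarrow> complex_of_real 0) at_top"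
      by (rule tendsto_of_real)
    then have X: "hasV (\<lambda>t. complex_of_real ((1 + t) powr \<alpha>2 h)) k 0" by (intro hasV_lim0) simp
    have "hasV (\<lambda>t. a2 (\<alpha>2 h) 0 * (complex_of_real ((1 + t) powr \<alpha>2 h) - 1) - KT0 h t) k
        (a2 (\<alpha>2 h) 0 * (0 - (if k = 0 then 1 else 0)) - 0)"
      unfolding KT0_def by (intro hasV_diff hasV_scale hasV_const hasV_Ksum X)
    moreover have "eventually (\<lambda>t. a2 (\<alpha>2 h) 0 * (complex_of_real ((1 + t) powr \<alpha>2 h) - 1) - KT0 h t
        = \<phi>t h (- complex_of_real t)) at_top"
      using eventually_gt_at_top[of 0] by eventually_elim (simp add: Phit_eq)
    ultimately have "hasV (\<lambda>t. \<phi>t h (- complex_of_real t)) k (a2 (\<alpha>2 h) 0 * (0 - (if k = 0 then 1 else 0)) - 0)"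
      by (rule hasV_ev)
    from hasV_unique[OF VT this] show ?thesis unfolding ind_def by simp
  qed
  have setsplit: "{..N2} = {..l0} \<union> {l0<..N2}" using l0 by auto
  have sumsplit: "(\<Sum>h\<le>N2. f h) = (\<Sum>h\<le>l0. f h) + (\<Sum>h\<in>{l0<..N2}. f h)" for f :: "nat \<Rightarrow> complex"
    unfolding setsplit by (rule sum.union_disjoint) auto
  have zero_part: "(\<Sum>h\<in>{l0<..N2}. complex_of_real (\<sigma> powr \<alpha>2 h) * (cT h + (if k = 0 then a2 (\<alpha>2 h) 0 else 0) + 0)) = 0"
    by (intro sum.neutral ballI) (auto simp: cTneg ind_def)
  have V2: "V = (\<Sum>h\<le>l0. complex_of_real (\<sigma> powr \<alpha>2 h) * cT h) + ind * (\<Sum>h\<le>l0. a2 (\<alpha>2 h) 0 * complex_of_real (\<sigma> powr \<alpha>2 h))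
      + (\<Sum>j\<le>p2. complex_of_real (\<sigma> ^ j) * cH j)
      + ind * (\<Sum>j\<le>p2. a2 (real j) 1 * complex_of_real (\<sigma> ^ j * ln \<sigma>)) - ind * LG2 (complex_of_real \<sigma>)"
  proof -
    have "V = (\<Sum>h\<le>l0. complex_of_real (\<sigma> powr \<alpha>2 h) * (cT h + (if k = 0 then a2 (\<alpha>2 h) 0 else 0) + 0))
      + (\<Sum>j\<le>p2. complex_of_real (\<sigma> ^ j) * (cH j + 0
          + a2 (real j) 1 * complex_of_real (ln \<sigma>) * (if k = 0 then poly ([:1, 1:] ^ j) 0 else 0)))
      - (if k = 0 then LG2 (complex_of_real \<sigma>) else 0) - (if k = 0 then poly p 0 else 0)"
      unfolding V_def sumsplit zero_part by simp
    also have "\<dots> = (\<Sum>h\<le>l0. complex_of_real (\<sigma> powr \<alpha>2 h) * cT h) + ind * (\<Sum>h\<le>l0. a2 (\<alpha>2 h) 0 * complex_of_real (\<sigma> powr \<alpha>2 h))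
      + (\<Sum>j\<le>p2. complex_of_real (\<sigma> ^ j) * cH j)
      + ind * (\<Sum>j\<le>p2. a2 (real j) 1 * complex_of_real (\<sigma> ^ j * ln \<sigma>)) - ind * LG2 (complex_of_real \<sigma>)"
      unfolding ind_def using p0 by (cases "k = 0") (simp_all add: sum.distrib distrib_left poly_power mult_ac sum_distrib_left)
    finally show ?thesis .
  qed
  have fin: "const_coeff (\<lambda>x. logGamma_seq St (- x)) k
      - ((\<Sum>h\<le>l0. cT h * complex_of_real (\<sigma> powr \<alpha>2 h)) + (\<Sum>l\<le>p2. cH l * complex_of_real (\<sigma> ^ l)))
    = (if k = 0 then - LG2 (complex_of_real \<sigma>)
        + (\<Sum>j\<le>p2. a2 (real j) 1 * complex_of_real (\<sigma> ^ j * ln \<sigma>))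
        + (\<Sum>h\<le>l0. a2 (\<alpha>2 h) 0 * complex_of_real (\<sigma> powr \<alpha>2 h)) else 0)"
    unfolding a0 V2 ind_def by (cases "k = 0") (simp_all add: mult_ac)
  show ?thesis using fin unfolding cT_def cH_def \<phi>t_def \<phi>h_def St_def LG2_def .
qed



lemma exp_pos:
  assumes s': "summable (\<lambda>n. norm (S n) powr (- s'))" and c: "c > 0" and lb: "\<And>n. norm (S n) \<ge> c"
  shows "s' > 0"
proof (rule ccontr)
  have lim: "(\<lambda>n. norm (S n) powr (- s')) \<longlonglongrightarrow> 0" using summable_LIMSEQ_zero[OF s'] .
  assume "\<not> s' > 0"
  then have "\<And>n. norm (S n) powr (- s') \<ge> c powr (- s')"
    using c lb by (intro powr_mono2) auto
  then have "eventually (\<lambda>n. norm (S n) powr (- s') \<ge> c powr (- s')) sequentially" by simp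
  then have "0 \<ge> c powr (- s')" by (intro tendsto_lowerbound[OF lim]) auto
  moreover have "c powr (- s') > 0" using c by simp
  ultimately show False by simp
qed

lemma exponent_conv_nonneg:
  assumes ex: "\<exists>s'. summable (\<lambda>n. norm (S n) powr (- s'))" and c: "c > 0" and lb: "\<And>n. norm (S n) \<ge> c"
  shows "exponent_conv S \<ge> 0"
  unfolding exponent_conv_def
proof (rule cInf_greatest)
  show "{s. summable (\<lambda>n. norm (S n) powr (- s))} \<noteq> {}" using ex by auto
  fix s assume "s \<in> {s. summable (\<lambda>n. norm (S n) powr (- s))}"
  then show "0 \<le> s" using exp_pos[OF _ c lb] by fastforce
qed

theorem mainTheorem11:
  fixes S1 :: "nat \<Rightarrow> real" and S2 :: "nat \<Rightarrow> complex"
    and s1 s2 :: real and p1 p2 N1 N2 l0 :: nat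
    and \<alpha>1 \<alpha>2 :: "nat \<Rightarrow> real" and a1 a2 :: "real \<Rightarrow> nat \<Rightarrow> complex"
    and K0 K2 :: "nat \<Rightarrow> nat \<Rightarrow> complex"
  assumes S1_pos: "\<forall>n. S1 n > 0"
    and S1_reg: "totally_regular_spectral (\<lambda>n. complex_of_real (S1 n)) s1 p1 \<alpha>1 N1 a1"
    and S2_reg: "totally_regular_spectral S2 s2 p2 \<alpha>2 N2 a2"
    and ord1: "\<alpha>1 N1 \<le> 0" and ord2: "\<alpha>2 N2 \<le> 0"
    and ord1_p2: "\<alpha>1 N1 < - real p2 - 1"
    and ord2_s1: "- \<alpha>2 N2 \<ge> s1"
    and ell: "l0 \<le> N2" "- \<alpha>2 l0 \<le> s1" "\<forall>h. l0 < h \<and> h \<le> N2 \<longrightarrow> s1 < - \<alpha>2 h"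
  shows
    "let p0 = nat \<lfloor>s1 + s2\<rfloor>;
         St = (\<lambda>n1 n2. (complex_of_real (S1 n1) + S2 n2) / complex_of_real (S1 n1));
         a0 = (\<lambda>k n1. const_coeff (\<lambda>x. logGamma_seq (St n1) (- x)) k);
         \<phi>t = (\<lambda>h x. a2 (\<alpha>2 h) 0 * ((1 - x) powr complex_of_real (\<alpha>2 h) - 1)
                    - (\<Sum>k=1..p0. K0 k h * (- x) ^ k));
         \<phi>h = (\<lambda>l x. a2 (real l) 1 * (1 - x) ^ l * ln (1 - x)
                    - (\<Sum>k=1..p0. K2 k l * (- x) ^ k));
         bsum = (\<lambda>k n1. (\<Sum>h\<le>l0. const_coeff (\<phi>t h) k * complex_of_real (S1 n1 powr \<alpha>2 h))
                      + (\<Sum>l\<le>p2. const_coeff (\<phi>h l) k * complex_of_real (S1 n1 ^ l)));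
         A = (\<lambda>k s. \<Sum>n1. (a0 k n1 - bsum k n1) * complex_of_real (S1 n1) powr (- s))
     in (\<forall>s. A 1 s = 0) \<and>
        (\<forall>s. A 0 s =
           (\<Sum>n1. (- logGamma_seq S2 (complex_of_real (S1 n1))
                   + (\<Sum>j\<le>p2. a2 (real j) 1 * complex_of_real (S1 n1 ^ j * ln (S1 n1)))
                   + (\<Sum>h\<le>l0. a2 (\<alpha>2 h) 0 * complex_of_real (S1 n1 powr \<alpha>2 h)))
                  * complex_of_real (S1 n1) powr (- s)))"
proof -
  from S2_reg have S2nz: "\<forall>n. S2 n \<noteq> 0" and ex2: "\<exists>s'. summable (\<lambda>n. norm (S2 n) powr (- s'))"
    and p2g: "p2 = genus S2"
    and sec2: "\<exists>c \<theta>. 0 < c \<and> 0 < \<theta> \<and> \<theta> < pi \<and> range S2 \<subseteq> sector c \<theta> \<and>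
        (\<lambda>x. logGamma_seq S2 (- x)
              - (\<Sum>h\<le>N2. a2 (\<alpha>2 h) 0 * (- x) powr complex_of_real (\<alpha>2 h))
              - (\<Sum>j\<le>p2. a2 (real j) 1 * (- x) ^ j * ln (- x)))
        \<in> o[outside_sector c \<theta>](\<lambda>x. (- x) powr complex_of_real (\<alpha>2 N2))"
    unfolding totally_regular_spectral_def by blast+
  from sec2 obtain c2 \<theta>2 where c2: "0 < c2" "\<theta>2 < pi" and rng2: "range S2 \<subseteq> sector c2 \<theta>2"
    and oc: "(\<lambda>x. logGamma_seq S2 (- x)
              - (\<Sum>h\<le>N2. a2 (\<alpha>2 h) 0 * (- x) powr complex_of_real (\<alpha>2 h))
              - (\<Sum>j\<le>p2. a2 (real j) 1 * (- x) ^ j * ln (- x)))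
        \<in> o[outside_sector c2 \<theta>2](\<lambda>x. (- x) powr complex_of_real (\<alpha>2 N2))"
    by blast
  have Re2: "\<And>n. Re (S2 n) \<ge> c2" using sector_Re[OF c2] rng2 by blast
  have n2: "\<And>n. norm (S2 n) \<ge> c2" using Re2 complex_Re_le_cmod order_trans by blast
  from ex2 obtain s' where s': "summable (\<lambda>n. norm (S2 n) powr (- s'))" by blast
  have sm2: "summable (\<lambda>n. 1 / norm (S2 n) ^ Suc (genus S2))"
    by (rule genus_summable[OF s' c2(1) n2])
  from S1_reg have ex1: "\<exists>s'. summable (\<lambda>n. norm (complex_of_real (S1 n)) powr (- s'))"
    and s1d: "s1 = exponent_conv (\<lambda>n. complex_of_real (S1 n))"
    and sec1: "\<exists>c \<theta>. 0 < c \<and> 0 < \<theta> \<and> \<theta> < pi \<and> range (\<lambda>n. complex_of_real (S1 n)) \<subseteq> sector c \<theta>"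
    unfolding totally_regular_spectral_def by blast+
  from sec1 obtain c1 \<theta>1 where c1: "0 < c1" "\<theta>1 < pi" and rng1: "range (\<lambda>n. complex_of_real (S1 n)) \<subseteq> sector c1 \<theta>1"
    by blast
  have n1: "\<And>n. norm (complex_of_real (S1 n)) \<ge> c1"
    using sector_Re[OF c1] rng1 complex_Re_le_cmod order_trans by (metis rangeI subsetD)
  have s1nn: "s1 \<ge> 0" unfolding s1d by (rule exponent_conv_nonneg[OF ex1 c1(1) n1])
  have neg: "\<And>h. l0 < h \<Longrightarrow> h \<le> N2 \<Longrightarrow> \<alpha>2 h < 0" using ell(3) s1nn by force
  note PN = per_n1[OF S1_pos[rule_format] S2nz c2 Re2 sm2 oc ord2 ell(1) neg]
  show ?thesis
    unfolding Let_def
  proof (intro conjI allI)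
    fix s :: complex
    show "(\<Sum>n1. (const_coeff (\<lambda>x. logGamma_seq (\<lambda>n2. (complex_of_real (S1 n1) + S2 n2) / complex_of_real (S1 n1)) (- x)) 1
        - ((\<Sum>h\<le>l0. const_coeff (\<lambda>x. a2 (\<alpha>2 h) 0 * ((1 - x) powr complex_of_real (\<alpha>2 h) - 1)
                    - (\<Sum>k = 1..nat \<lfloor>s1 + s2\<rfloor>. K0 k h * (- x) ^ k)) 1 * complex_of_real (S1 n1 powr \<alpha>2 h))
       + (\<Sum>l\<le>p2. const_coeff (\<lambda>x. a2 (real l) 1 * (1 - x) ^ l * ln (1 - x)
                    - (\<Sum>k = 1..nat \<lfloor>s1 + s2\<rfloor>. K2 k l * (- x) ^ k)) 1 * complex_of_real (S1 n1 ^ l))))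
        * complex_of_real (S1 n1) powr - s) = 0"
      using PN[where k=1] by simp
  next
    fix s :: complex
    show "(\<Sum>n1. (const_coeff (\<lambda>x. logGamma_seq (\<lambda>n2. (complex_of_real (S1 n1) + S2 n2) / complex_of_real (S1 n1)) (- x)) 0
        - ((\<Sum>h\<le>l0. const_coeff (\<lambda>x. a2 (\<alpha>2 h) 0 * ((1 - x) powr complex_of_real (\<alpha>2 h) - 1)
                    - (\<Sum>k = 1..nat \<lfloor>s1 + s2\<rfloor>. K0 k h * (- x) ^ k)) 0 * complex_of_real (S1 n1 powr \<alpha>2 h))
       + (\<Sum>l\<le>p2. const_coeff (\<lambda>x. a2 (real l) 1 * (1 - x) ^ l * ln (1 - x)
                    - (\<Sum>k = 1..nat \<lfloor>s1 + s2\<rfloor>. K2 k l * (- x) ^ k)) 0 * complex_of_real (S1 n1 ^ l))))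
        * complex_of_real (S1 n1) powr - s) =
      (\<Sum>n1. (- logGamma_seq S2 (complex_of_real (S1 n1))
                   + (\<Sum>j\<le>p2. a2 (real j) 1 * complex_of_real (S1 n1 ^ j * ln (S1 n1)))
                   + (\<Sum>h\<le>l0. a2 (\<alpha>2 h) 0 * complex_of_real (S1 n1 powr \<alpha>2 h)))
                  * complex_of_real (S1 n1) powr (- s))"
      using PN[where k=0] by simp
  qed
qed


end
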